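(* Let $a,b,c>0$ with $b+c-a>0$. Then $B(a,b,c)$ is a positive bounded operator on $\ell^2(\mathbb{Z}_+)$ and \[ \|B(a,b,c)\|=\frac{1}{\Gamma(b+c-a)}\Gamma\!\left(\frac{b+c-a}{2}\right)^{2}\quad\text{if } a+b-c\ge0 \text{ and } a+c-b\ge 0, \] \[ \|B(a,b,c)\|=\frac{\Gamma(b)\Gamma(c-a)}{\Gamma(b+c-a)}\quad\text{if } a+b-c<0 \text{ and } a+c-b\ge 0, \] and $\|B(a,b,c)\|=\frac{\Gamma(c)\Gamma(b-a)}{\Gamma(b+c-a)}$ if $a+b-c\ge0$ and $a+c-b<0$. Consequently, for every real sequence $\{\xi_k\}$ and every $n\in\mathbb{Z}_+$, \[ 0\le\sum_{j=0}^{n}\sum_{k=0}^{n}\frac{\Gamma(j+k+a)}{\Gamma(j+k+b+c)}\xi_j\xi_k\le\|B(a,b,c)\|\sum_{k=0}^{n}\frac{\Gamma(k+a)\,k!}{\Gamma(k+b)\Gamma(k+c)}\xi_k^2, \] and the constant $\|B(a,b,c)\|$ is best possible.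
   Context: $\mathbb{Z}_{+}=\{0,1,2,\ldots\}$; $B(a,b,c)$ is the semi-infinite matrix with entries $B_{j,k}=\frac{\Gamma(j+k+a)}{\Gamma(j+k+b+c)}\sqrt{\frac{\Gamma(j+b)\Gamma(j+c)\Gamma(k+b)\Gamma(k+c)}{\Gamma(j+a)\,j!\,\Gamma(k+a)\,k!}}$, $j,k\in\mathbb{Z}_+$. *)

theory Defs
  imports "HOL-Analysis.Analysis"
begin

definition Bmat :: "real \<Rightarrow> real \<Rightarrow> real \<Rightarrow> nat \<Rightarrow> nat \<Rightarrow> real" where
  "Bmat a b c j k =
     Gamma (real (j + k) + a) / Gamma (real (j + k) + b + c) *
     sqrt ((Gamma (real j + b) * Gamma (real j + c) * Gamma (real k + b) * Gamma (real k + c)) /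
           (Gamma (real j + a) * fact j * Gamma (real k + a) * fact k))"

definition l2 :: "(nat \<Rightarrow> real) \<Rightarrow> bool" where
  "l2 x \<longleftrightarrow> summable (\<lambda>k. (x k)\<^sup>2)"

definition l2norm :: "(nat \<Rightarrow> real) \<Rightarrow> real" where
  "l2norm x = sqrt (\<Sum>k. (x k)\<^sup>2)"

definition mat_apply :: "(nat \<Rightarrow> nat \<Rightarrow> real) \<Rightarrow> (nat \<Rightarrow> real) \<Rightarrow> nat \<Rightarrow> real" where
  "mat_apply M x j = (\<Sum>k. M j k * x k)"

definition bounded_mat_op :: "(nat \<Rightarrow> nat \<Rightarrow> real) \<Rightarrow> bool" where
  "bounded_mat_op M \<longleftrightarrow> (\<exists>C. \<forall>x. l2 x \<longrightarrow>
      (\<forall>j. summable (\<lambda>k. M j k * x k)) \<and> l2 (mat_apply M x) \<and>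
      l2norm (mat_apply M x) \<le> C * l2norm x)"

definition mat_op_norm :: "(nat \<Rightarrow> nat \<Rightarrow> real) \<Rightarrow> real" where
  "mat_op_norm M = Sup {l2norm (mat_apply M x) | x. l2 x \<and> l2norm x \<le> 1}"

definition positive_mat_op :: "(nat \<Rightarrow> nat \<Rightarrow> real) \<Rightarrow> bool" where
  "positive_mat_op M \<longleftrightarrow> (\<forall>x. l2 x \<longrightarrow> (\<Sum>j. mat_apply M x j * x j) \<ge> 0)"

end

theory Submission
  imports Defs "HOL-Real_Asymp.Real_Asymp"
begin

lemma mult_div_aux: "(m * p / f) * (m * t) = ((m * m) * p / f * (t::real))"
  by (simp add: field_simps)

lemma neg_binom_series:
  fixes t \<beta> :: real
  assumes "0 \<le> t" "t < 1" "\<beta> > 0"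
  shows "(\<lambda>k. Gamma (real k + \<beta>) / fact k * t ^ k) sums (Gamma \<beta> * (1 - t) powr (- \<beta>))"
proof -
  have "\<bar>-t\<bar> < 1" using assms by simp
  from gen_binomial_real[OF this, of "-\<beta>"]
  have s: "(\<lambda>k. ((-\<beta>) gchoose k) * (-t)^k) sums (1 - t) powr (- \<beta>)" by simp
  have nz: "\<beta> \<notin> \<int>\<^sub>\<le>\<^sub>0" using assms by (auto elim!: nonpos_Ints_cases)
  have eq: "((-\<beta>) gchoose k) * (-t)^k = Gamma (real k + \<beta>) / fact k * t ^ k / Gamma \<beta>" for k
  proof -
    have m1: "(-1::real)^k * (-1)^k = 1" by (induct k) auto
    have "(-t)^k = (-1)^k * t^k" by (rule power_minus)
    have g: "((-\<beta>) gchoose k) = (-1)^k * pochhammer \<beta> k / fact k"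
      using gbinomial_pochhammer[of "-\<beta>" k] by simp
    have "((-\<beta>) gchoose k) * (-t)^k = ((-1)^k * (-1)^k) * pochhammer \<beta> k / fact k * t^k"
      unfolding g \<open>(-t)^k = (-1)^k * t^k\<close>
      using mult_div_aux[of "(-1::real)^k" "pochhammer \<beta> k" "fact k" "t^k"] .
    also note m1
    also have "pochhammer \<beta> k = Gamma (\<beta> + real k) / Gamma \<beta>" using pochhammer_Gamma[OF nz] by simp
    finally show ?thesis by (simp add: add.commute)
  qed
  from s have "(\<lambda>k. Gamma (real k + \<beta>) / fact k * t ^ k / Gamma \<beta>) sums (1 - t) powr (- \<beta>)"
    by (simp add: eq)
  from sums_mult[OF this, of "Gamma \<beta>"] show ?thesis using assms Gamma_real_pos[of \<beta>] by (simp add: less_imp_neq[symmetric])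
qed

lemma gauss_sum:
  fixes \<alpha> \<beta> \<gamma> :: real
  assumes a: "\<alpha> > 0" and b: "\<beta> > 0" and g: "\<gamma> - \<alpha> - \<beta> > 0"
  shows "(\<lambda>k. Gamma (real k + \<alpha>) / Gamma (real k + \<gamma>) * (Gamma (real k + \<beta>) / fact k)) sums
           (Gamma \<alpha> * Gamma \<beta> * Gamma (\<gamma> - \<alpha> - \<beta>) / (Gamma (\<gamma> - \<alpha>) * Gamma (\<gamma> - \<beta>)))"
proof -
  define \<delta> where "\<delta> = \<gamma> - \<alpha>"
  have d: "\<delta> > 0" "\<delta> - \<beta> > 0" using g b unfolding \<delta>_def by auto
  define S where "S = {0<..<(1::real)}"
  define c where "c k = Gamma (real k + \<beta>) / fact k" for k
  define h where "h k t = c k * (t powr (real k + \<alpha> - 1) * (1 - t) powr (\<delta> - 1)) / Gamma \<delta>" for k t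
  define a where "a k = Gamma (real k + \<alpha>) / Gamma (real k + \<gamma>) * c k" for k
  define G where "G t = Gamma \<beta> / Gamma \<delta> * (t powr (\<alpha> - 1) * (1 - t) powr (\<delta> - \<beta> - 1))" for t
  have c0: "c k \<ge> 0" for k unfolding c_def using b by simp
  have a0: "a k \<ge> 0" for k unfolding a_def using c0 a g b
    by (intro mult_nonneg_nonneg divide_nonneg_nonneg) auto
  have hint: "(h k has_integral a k) S" for k
  proof -
    have "((\<lambda>t. t powr (real k + \<alpha> - 1) * (1 - t) powr (\<delta> - 1)) has_integral Beta (real k + \<alpha>) \<delta>) S"
      unfolding S_def using has_integral_Beta_real[of "real k + \<alpha>" \<delta>] a d
      by (simp add: has_integral_Icc_iff_Ioo)
    from has_integral_mult_right[OF this, of "c k / Gamma \<delta>"]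
    have "(h k has_integral c k / Gamma \<delta> * Beta (real k + \<alpha>) \<delta>) S"
      unfolding h_def by (simp add: field_simps)
    moreover have "c k / Gamma \<delta> * Beta (real k + \<alpha>) \<delta> = a k"
      using Gamma_real_pos[OF d(1)] unfolding a_def Beta_def \<delta>_def
      by (simp add: field_simps)
    ultimately show ?thesis by simp
  qed
  have Gint: "(G has_integral Gamma \<alpha> * Gamma \<beta> * Gamma (\<gamma> - \<alpha> - \<beta>) / (Gamma (\<gamma> - \<alpha>) * Gamma (\<gamma> - \<beta>))) S"
  proof -
    have "((\<lambda>t. t powr (\<alpha> - 1) * (1 - t) powr (\<delta> - \<beta> - 1)) has_integral Beta \<alpha> (\<delta> - \<beta>)) S"
      unfolding S_def using has_integral_Beta_real[of \<alpha> "\<delta> - \<beta>"] a d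
      by (simp add: has_integral_Icc_iff_Ioo)
    from has_integral_mult_right[OF this, of "Gamma \<beta> / Gamma \<delta>"]
    have "(G has_integral Gamma \<beta> / Gamma \<delta> * Beta \<alpha> (\<delta> - \<beta>)) S"
      unfolding G_def by simp
    moreover have "Gamma \<beta> / Gamma \<delta> * Beta \<alpha> (\<delta> - \<beta>) = Gamma \<alpha> * Gamma \<beta> * Gamma (\<gamma> - \<alpha> - \<beta>) / (Gamma (\<gamma> - \<alpha>) * Gamma (\<gamma> - \<beta>))"
      unfolding Beta_def \<delta>_def by (simp add: field_simps)
    ultimately show ?thesis by simp
  qed
  have hsum: "(\<lambda>k. h k t) sums G t" if t: "t \<in> S" for t
  proof -
    from t have t0: "0 < t" "t < 1" unfolding S_def by auto
    have "(\<lambda>k. c k * t ^ k) sums (Gamma \<beta> * (1 - t) powr (- \<beta>))"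
      using neg_binom_series[of t \<beta>] t0 b unfolding c_def by simp
    from sums_mult[OF this, of "t powr (\<alpha> - 1) * (1 - t) powr (\<delta> - 1) / Gamma \<delta>"]
    have "(\<lambda>k. t powr (\<alpha> - 1) * (1 - t) powr (\<delta> - 1) / Gamma \<delta> * (c k * t ^ k)) sums
           (t powr (\<alpha> - 1) * (1 - t) powr (\<delta> - 1) / Gamma \<delta> * (Gamma \<beta> * (1 - t) powr (- \<beta>)))" .
    moreover have "t powr (\<alpha> - 1) * (1 - t) powr (\<delta> - 1) / Gamma \<delta> * (c k * t ^ k) = h k t" for k
    proof -
      have "t powr (real k + \<alpha> - 1) = t ^ k * t powr (\<alpha> - 1)"
        using t0 by (simp add: powr_add[symmetric] powr_realpow[symmetric] algebra_simps)
      thus ?thesis unfolding h_def by simp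
    qed
    moreover have "t powr (\<alpha> - 1) * (1 - t) powr (\<delta> - 1) / Gamma \<delta> * (Gamma \<beta> * (1 - t) powr (- \<beta>)) = G t"
    proof -
      have "(1 - t) powr (\<delta> - 1) * (1 - t) powr (- \<beta>) = (1 - t) powr (\<delta> - \<beta> - 1)"
        using t0 by (simp add: powr_add[symmetric] algebra_simps)
      thus ?thesis unfolding G_def by (simp add: field_simps)
    qed
    ultimately show ?thesis by simp
  qed
  have h0: "h k t \<ge> 0" if "t \<in> S" for k t
    using that c0 d unfolding h_def S_def by simp
  define f where "f n t = (\<Sum>k<n. h k t)" for n t
  have fint: "(f n has_integral (\<Sum>k<n. a k)) S" for n
    unfolding f_def by (rule has_integral_sum) (auto intro: hint)
  have fle: "f n t \<le> G t" if "t \<in> S" for n t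
  proof -
    have "f n t \<le> suminf (\<lambda>k. h k t)" unfolding f_def
      by (rule sum_le_suminf) (use hsum[OF that] h0[OF that] in \<open>auto simp: sums_iff\<close>)
    thus ?thesis using hsum[OF that] by (simp add: sums_iff)
  qed
  have mc: "G integrable_on S \<and> ((\<lambda>n. integral S (f n)) \<longlongrightarrow> integral S G) sequentially"
  proof (rule monotone_convergence_increasing)
    show "f n integrable_on S" for n using fint by blast
    show "f n t \<le> f (Suc n) t" if "t \<in> S" for n t unfolding f_def using h0[OF that] by simp
    show "(\<lambda>n. f n t) \<longlonglongrightarrow> G t" if "t \<in> S" for t
      using hsum[OF that] unfolding f_def sums_def .
    have "\<bar>integral S (f n)\<bar> \<le> integral S G" for n
    proof -
      have "integral S (f n) = (\<Sum>k<n. a k)" using fint by blast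
      moreover have "(\<Sum>k<n. a k) \<ge> 0" using a0 by (simp add: sum_nonneg)
      moreover have "integral S (f n) \<le> integral S G"
        using fint Gint fle by (intro integral_le) auto
      ultimately show ?thesis by simp
    qed
    thus "bounded (range (\<lambda>n. integral S (f n)))"
      unfolding bounded_iff by (auto intro!: exI[of _ "integral S G"])
  qed
  have "(\<lambda>n. (\<Sum>k<n. a k)) \<longlonglongrightarrow> Gamma \<alpha> * Gamma \<beta> * Gamma (\<gamma> - \<alpha> - \<beta>) / (Gamma (\<gamma> - \<alpha>) * Gamma (\<gamma> - \<beta>))"
  proof -
    have "integral S (f n) = (\<Sum>k<n. a k)" for n using fint[of n] by (rule integral_unique)
    thus ?thesis using mc integral_unique[OF Gint] by simp
  qed
  thus ?thesis unfolding sums_def a_def c_def .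
qed

lemma series_CS:
  fixes u v :: "nat \<Rightarrow> real"
  assumes su: "summable (\<lambda>k. (u k)\<^sup>2)" and sv: "summable (\<lambda>k. (v k)\<^sup>2)"
  shows "summable (\<lambda>k. u k * v k)" "(\<Sum>k. u k * v k)\<^sup>2 \<le> (\<Sum>k. (u k)\<^sup>2) * (\<Sum>k. (v k)\<^sup>2)"
proof -
  have b: "norm (u k * v k) \<le> ((u k)\<^sup>2 + (v k)\<^sup>2) / 2" for k
  proof -
    have "0 \<le> (\<bar>u k\<bar> - \<bar>v k\<bar>)\<^sup>2" by simp
    thus ?thesis by (simp add: power2_eq_square abs_mult algebra_simps)
  qed
  have s2: "summable (\<lambda>k. ((u k)\<^sup>2 + (v k)\<^sup>2) / 2)"
    using summable_add[OF su sv] by (intro summable_divide)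
  show s: "summable (\<lambda>k. u k * v k)"
    by (rule summable_comparison_test[OF _ s2]) (use b in auto)
  have lim: "(\<lambda>n. (\<Sum>k<n. u k * v k)\<^sup>2) \<longlonglongrightarrow> (\<Sum>k. u k * v k)\<^sup>2"
    using summable_LIMSEQ[OF s] by (intro tendsto_intros)
  have "(\<Sum>k<n. u k * v k)\<^sup>2 \<le> (\<Sum>k. (u k)\<^sup>2) * (\<Sum>k. (v k)\<^sup>2)" for n
  proof -
    have "(\<Sum>k<n. u k * v k)\<^sup>2 \<le> (\<Sum>k<n. (u k)\<^sup>2) * (\<Sum>k<n. (v k)\<^sup>2)"
      by (rule Cauchy_Schwarz_ineq_sum)
    also have "\<dots> \<le> (\<Sum>k. (u k)\<^sup>2) * (\<Sum>k. (v k)\<^sup>2)"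
      by (intro mult_mono sum_le_suminf su sv) (auto intro: sum_nonneg suminf_nonneg su sv)
    finally show ?thesis .
  qed
  thus "(\<Sum>k. u k * v k)\<^sup>2 \<le> (\<Sum>k. (u k)\<^sup>2) * (\<Sum>k. (v k)\<^sup>2)"
    by (intro tendsto_le[OF _ tendsto_const lim]) auto
qed

lemma series_CS_abs:
  fixes u v :: "nat \<Rightarrow> real"
  assumes su: "summable (\<lambda>k. (u k)\<^sup>2)" and sv: "summable (\<lambda>k. (v k)\<^sup>2)"
  shows "\<bar>\<Sum>k. u k * v k\<bar> \<le> sqrt (\<Sum>k. (u k)\<^sup>2) * sqrt (\<Sum>k. (v k)\<^sup>2)"
proof -
  have "sqrt ((\<Sum>k. u k * v k)\<^sup>2) \<le> sqrt ((\<Sum>k. (u k)\<^sup>2) * (\<Sum>k. (v k)\<^sup>2))"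
    using series_CS(2)[OF su sv] by (rule real_sqrt_le_mono)
  thus ?thesis by (simp add: real_sqrt_mult)
qed

locale schur =
  fixes M :: "nat \<Rightarrow> nat \<Rightarrow> real" and q :: "nat \<Rightarrow> real" and L :: real
  assumes M0: "\<And>j k. M j k \<ge> 0"
    and Msym: "\<And>j k. M j k = M k j"
    and q0: "\<And>k. q k > 0"
    and rsum: "\<And>j. summable (\<lambda>k. M j k * q k)"
    and rle: "\<And>j. (\<Sum>k. M j k * q k) \<le> L * q j"
begin

lemma qq: "q k \<ge> 0" using q0[of k] by simp

lemma L0: "L \<ge> 0"
proof -
  have "0 \<le> (\<Sum>k. M 0 k * q k)" using M0 q0 by (intro suminf_nonneg rsum) (simp add: less_imp_le)
  also have "\<dots> \<le> L * q 0" by (rule rle)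
  finally show ?thesis using q0[of 0] by (simp add: zero_le_mult_iff)
qed

lemma colsum: "(\<Sum>j<N. M j k * q j) \<le> L * q k"
proof -
  have "(\<Sum>j<N. M j k * q j) = (\<Sum>j<N. M k j * q j)" by (simp add: Msym)
  also have "\<dots> \<le> (\<Sum>j. M k j * q j)"
    using M0 qq by (intro sum_le_suminf rsum) (auto intro: mult_nonneg_nonneg)
  also have "\<dots> \<le> L * q k" by (rule rle)
  finally show ?thesis .
qed

context
  fixes x :: "nat \<Rightarrow> real"
  assumes xl2: "summable (\<lambda>k. (x k)\<^sup>2)"
begin

definition "X = (\<Sum>k. (x k)\<^sup>2)"

lemma fin_bound: "(\<Sum>j<N. q j * (\<Sum>k<K. M j k * (x k)\<^sup>2 / q k)) \<le> L * X"
proof -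
  have "(\<Sum>j<N. q j * (\<Sum>k<K. M j k * (x k)\<^sup>2 / q k)) = (\<Sum>k<K. (x k)\<^sup>2 / q k * (\<Sum>j<N. M j k * q j))"
    by (simp add: sum_distrib_left sum_distrib_right mult_ac sum.swap[of _ "{..<N}"])
  also have "\<dots> \<le> (\<Sum>k<K. (x k)\<^sup>2 / q k * (L * q k))"
    using qq by (intro sum_mono mult_left_mono colsum) (auto intro: divide_nonneg_nonneg)
  also have "\<dots> = L * (\<Sum>k<K. (x k)\<^sup>2)"
    using q0 by (simp add: sum_distrib_left field_simps less_imp_neq[symmetric])
  also have "\<dots> \<le> L * X" unfolding X_def
    using L0 by (intro mult_left_mono sum_le_suminf xl2) auto
  finally show ?thesis .
qed

lemma T_summable: "summable (\<lambda>k. M j k * (x k)\<^sup>2 / q k)"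
proof (rule summableI_nonneg_bounded[where x = "L * X / q j"])
  show "0 \<le> M j k * (x k)\<^sup>2 / q k" for k using M0 q0 by (simp add: less_imp_le)
  show "(\<Sum>k<K. M j k * (x k)\<^sup>2 / q k) \<le> L * X / q j" for K
  proof -
    have nn: "0 \<le> q i * (\<Sum>k<K. M i k * (x k)\<^sup>2 / q k)" for i
      using M0 q0 by (intro mult_nonneg_nonneg sum_nonneg) (auto simp: less_imp_le)
    have "q j * (\<Sum>k<K. M j k * (x k)\<^sup>2 / q k) \<le> (\<Sum>i<Suc j. q i * (\<Sum>k<K. M i k * (x k)\<^sup>2 / q k))"
      using nn by (intro member_le_sum) auto
    also have "\<dots> \<le> L * X" by (rule fin_bound)
    finally show ?thesis using q0[of j] by (simp add: field_simps)
  qed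
qed

definition "T j = (\<Sum>k. M j k * (x k)\<^sup>2 / q k)"

lemma T0: "T j \<ge> 0" unfolding T_def using M0 q0 by (intro suminf_nonneg T_summable) (simp add: less_imp_le)

lemma qT_fin: "(\<Sum>j<N. q j * T j) \<le> L * X"
proof -
  have "(\<lambda>K. \<Sum>j<N. q j * (\<Sum>k<K. M j k * (x k)\<^sup>2 / q k)) \<longlonglongrightarrow> (\<Sum>j<N. q j * T j)"
    unfolding T_def by (intro tendsto_intros summable_LIMSEQ T_summable)
  thus ?thesis by (intro tendsto_le[OF _ tendsto_const]) (auto intro: always_eventually fin_bound)
qed

lemma qT_summable: "summable (\<lambda>j. q j * T j)"
  by (rule summableI_nonneg_bounded[where x = "L * X"]) (use qq T0 qT_fin in \<open>auto intro: mult_nonneg_nonneg\<close>)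

lemma qT_le: "(\<Sum>j. q j * T j) \<le> L * X"
  by (rule suminf_le_const[OF qT_summable]) (rule qT_fin)

lemma row_summable: "summable (\<lambda>k. M j k * x k)"
  and row_sq: "(\<Sum>k. M j k * x k)\<^sup>2 \<le> (\<Sum>k. M j k * q k) * T j"
proof -
  define u where "u k = sqrt (M j k * q k)" for k
  define v where "v k = sqrt (M j k / q k) * x k" for k
  have uv: "u k * v k = M j k * x k" for k
  proof -
    have "sqrt (M j k * q k) * sqrt (M j k / q k) = sqrt (M j k * M j k)"
      using q0[of k] by (simp add: real_sqrt_mult[symmetric])
    also have "\<dots> = M j k" using M0 by simp
    finally show ?thesis unfolding u_def v_def by (simp add: mult.assoc[symmetric])
  qed
  have u2: "(u k)\<^sup>2 = M j k * q k" for k unfolding u_def using M0 q0 by (simp add: less_imp_le)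
  have v2: "(v k)\<^sup>2 = M j k * (x k)\<^sup>2 / q k" for k unfolding v_def using M0 q0
    by (simp add: power_mult_distrib less_imp_le)
  have su: "summable (\<lambda>k. (u k)\<^sup>2)" unfolding u2 by (rule rsum)
  have sv: "summable (\<lambda>k. (v k)\<^sup>2)" unfolding v2 by (rule T_summable)
  show "summable (\<lambda>k. M j k * x k)" using series_CS(1)[OF su sv] by (simp add: uv)
  show "(\<Sum>k. M j k * x k)\<^sup>2 \<le> (\<Sum>k. M j k * q k) * T j"
    using series_CS(2)[OF su sv] by (simp add: uv u2 v2 T_def)
qed

lemma Mx_l2: "summable (\<lambda>j. (mat_apply M x j)\<^sup>2)"
  and Mx_sq: "(\<Sum>j. (mat_apply M x j)\<^sup>2) \<le> L\<^sup>2 * X"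
proof -
  have b: "(mat_apply M x j)\<^sup>2 \<le> L * (q j * T j)" for j
  proof -
    have "(mat_apply M x j)\<^sup>2 \<le> (\<Sum>k. M j k * q k) * T j" unfolding mat_apply_def by (rule row_sq)
    also have "\<dots> \<le> (L * q j) * T j" by (intro mult_right_mono rle T0)
    finally show ?thesis by (simp add: mult_ac)
  qed
  have s: "summable (\<lambda>j. L * (q j * T j))" by (intro summable_mult qT_summable)
  show "summable (\<lambda>j. (mat_apply M x j)\<^sup>2)"
    by (rule summable_comparison_test[OF _ s]) (use b in auto)
  hence "(\<Sum>j. (mat_apply M x j)\<^sup>2) \<le> (\<Sum>j. L * (q j * T j))"
    by (intro suminf_le s b)
  also have "\<dots> = L * (\<Sum>j. q j * T j)" by (intro suminf_mult qT_summable)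
  also have "\<dots> \<le> L * (L * X)" by (intro mult_left_mono qT_le L0)
  finally show "(\<Sum>j. (mat_apply M x j)\<^sup>2) \<le> L\<^sup>2 * X" by (simp add: power2_eq_square mult_ac)
qed

lemma Mx_norm: "l2norm (mat_apply M x) \<le> L * l2norm x"
proof -
  have "l2norm (mat_apply M x) \<le> sqrt (L\<^sup>2 * X)" unfolding l2norm_def by (intro real_sqrt_le_mono Mx_sq)
  also have "\<dots> = L * l2norm x" unfolding l2norm_def X_def using L0 by (simp add: real_sqrt_mult)
  finally show ?thesis .
qed

end

lemma bounded: "bounded_mat_op M"
  unfolding bounded_mat_op_def l2_def using row_summable Mx_l2 Mx_norm by blast

end

definition trunc :: "nat \<Rightarrow> (nat \<Rightarrow> real) \<Rightarrow> nat \<Rightarrow> real" where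
  "trunc n \<xi> k = (if k \<le> n then \<xi> k else 0)"

lemma trunc_sum: "summable f \<Longrightarrow> True" by simp

lemma trunc_l2: "summable (\<lambda>k. (trunc n \<xi> k)\<^sup>2)"
  by (rule summable_finite[of "{..n}"]) (auto simp: trunc_def)

lemma trunc_sq: "(\<Sum>k. (trunc n \<xi> k)\<^sup>2) = (\<Sum>k\<le>n. (\<xi> k)\<^sup>2)"
  by (subst suminf_finite[of "{..n}"]) (auto simp: trunc_def)

lemma trunc_apply: "mat_apply M (trunc n \<xi>) j = (\<Sum>k\<le>n. M j k * \<xi> k)"
  unfolding mat_apply_def by (subst suminf_finite[of "{..n}"]) (auto simp: trunc_def)

lemma trunc_quad: "(\<Sum>j. mat_apply M (trunc n \<xi>) j * trunc n \<xi> j) = (\<Sum>j\<le>n. \<Sum>k\<le>n. M j k * \<xi> j * \<xi> k)"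
proof -
  have "(\<Sum>j. mat_apply M (trunc n \<xi>) j * trunc n \<xi> j) = (\<Sum>j\<le>n. mat_apply M (trunc n \<xi>) j * trunc n \<xi> j)"
    by (rule suminf_finite) (auto simp: trunc_def)
  also have "\<dots> = (\<Sum>j\<le>n. (\<Sum>k\<le>n. M j k * \<xi> k) * \<xi> j)"
    by (rule sum.cong) (auto simp: trunc_def trunc_apply)
  also have "\<dots> = (\<Sum>j\<le>n. \<Sum>k\<le>n. M j k * \<xi> j * \<xi> k)"
    by (rule sum.cong[OF refl], subst sum_distrib_right, rule sum.cong) (auto simp: mult_ac)
  finally show ?thesis .
qed

lemma l2_diff:
  fixes x y :: "nat \<Rightarrow> real"
  assumes sx: "summable (\<lambda>k. (x k)\<^sup>2)" and sy: "summable (\<lambda>k. (y k)\<^sup>2)"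
  shows "summable (\<lambda>k. (x k - y k)\<^sup>2)"
proof -
  have b: "norm ((x k - y k)\<^sup>2) \<le> 2 * (x k)\<^sup>2 + 2 * (y k)\<^sup>2" for k
  proof -
    have "0 \<le> (x k + y k)\<^sup>2" by (rule zero_le_power2)
    hence "(x k - y k)\<^sup>2 \<le> 2 * (x k)\<^sup>2 + 2 * (y k)\<^sup>2" unfolding power2_diff power2_sum by linarith
    thus ?thesis by simp
  qed
  have s: "summable (\<lambda>k. 2 * (x k)\<^sup>2 + 2 * (y k)\<^sup>2)"
    by (rule summable_add[OF summable_mult[OF sx] summable_mult[OF sy]])
  show ?thesis by (rule summable_comparison_test'[OF s b])
qed

lemma l2norm_nn: "summable (\<lambda>k. (x k)\<^sup>2) \<Longrightarrow> l2norm x \<ge> 0"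
  unfolding l2norm_def by (simp add: suminf_nonneg)

lemma alg3: "(A::real) = Y + E \<Longrightarrow> X = y + e \<Longrightarrow> A * X = Y*y + Y*e + E*X"
  by (simp add: algebra_simps)

lemma inner_bound:
  "summable (\<lambda>k. (u k)\<^sup>2) \<Longrightarrow> summable (\<lambda>k. (v k)\<^sup>2) \<Longrightarrow> \<bar>\<Sum>k. u k * v k\<bar> \<le> l2norm u * l2norm v"
  unfolding l2norm_def by (rule series_CS_abs)

context schur begin

lemma apply_diff:
  assumes "summable (\<lambda>k. (x k)\<^sup>2)" "summable (\<lambda>k. (y k)\<^sup>2)"
  shows "mat_apply M (\<lambda>k. x k - y k) j = mat_apply M x j - mat_apply M y j"
proof -
  have "(\<Sum>k. M j k * (x k - y k)) = (\<Sum>k. M j k * x k - M j k * y k)"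
    by (simp only: right_diff_distrib)
  also have "\<dots> = (\<Sum>k. M j k * x k) - (\<Sum>k. M j k * y k)"
    by (rule suminf_diff[symmetric, OF row_summable[OF assms(1)] row_summable[OF assms(2)]])
  finally show ?thesis unfolding mat_apply_def .
qed

lemma positive:
  assumes fin: "\<And>n \<xi>. 0 \<le> (\<Sum>j\<le>n. \<Sum>k\<le>n. M j k * \<xi> j * \<xi> k)"
  shows "positive_mat_op M"
  unfolding positive_mat_op_def l2_def
proof (intro allI impI)
  fix x :: "nat \<Rightarrow> real" assume xl: "summable (\<lambda>k. (x k)\<^sup>2)"
  define e where "e n k = x k - trunc n x k" for n k
  have yl: "summable (\<lambda>k. (trunc n x k)\<^sup>2)" for n by (rule trunc_l2)
  have el: "summable (\<lambda>k. (e n k)\<^sup>2)" for n unfolding e_def by (rule l2_diff[OF xl yl])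
  have Mxl: "summable (\<lambda>j. (mat_apply M x j)\<^sup>2)" by (rule Mx_l2[OF xl])
  have Myl: "summable (\<lambda>j. (mat_apply M (trunc n x) j)\<^sup>2)" for n by (rule Mx_l2[OF yl])
  have Mel: "summable (\<lambda>j. (mat_apply M (e n) j)\<^sup>2)" for n by (rule Mx_l2[OF el])
  have ny: "l2norm (trunc n x) \<le> l2norm x" for n
  proof -
    have "(trunc n x k)\<^sup>2 \<le> (x k)\<^sup>2" for k by (simp add: trunc_def)
    hence "(\<Sum>k. (trunc n x k)\<^sup>2) \<le> (\<Sum>k. (x k)\<^sup>2)" by (intro suminf_le yl xl)
    thus ?thesis unfolding l2norm_def by simp
  qed
  have bound: "(\<Sum>j. mat_apply M x j * x j) \<ge> - (2 * L * l2norm x * l2norm (e n))" for n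
  proof -
    have dec: "mat_apply M x j = mat_apply M (trunc n x) j + mat_apply M (e n) j" for j
      using apply_diff[OF xl yl[of n], of j] unfolding e_def by simp
    have xe: "x j = trunc n x j + e n j" for j unfolding e_def by simp
    have s1: "summable (\<lambda>j. mat_apply M (trunc n x) j * trunc n x j)" by (rule series_CS(1)[OF Myl yl])
    have s2: "summable (\<lambda>j. mat_apply M (trunc n x) j * e n j)" by (rule series_CS(1)[OF Myl el])
    have s3: "summable (\<lambda>j. mat_apply M (e n) j * x j)" by (rule series_CS(1)[OF Mel xl])
    have "(\<Sum>j. mat_apply M x j * x j) =
          (\<Sum>j. mat_apply M (trunc n x) j * trunc n x j + mat_apply M (trunc n x) j * e n j + mat_apply M (e n) j * x j)"
      by (rule suminf_cong) (rule alg3[OF dec xe])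
    also have "\<dots> = (\<Sum>j. mat_apply M (trunc n x) j * trunc n x j + mat_apply M (trunc n x) j * e n j) + (\<Sum>j. mat_apply M (e n) j * x j)"
      by (rule suminf_add[OF summable_add[OF s1 s2] s3, symmetric])
    also have "(\<Sum>j. mat_apply M (trunc n x) j * trunc n x j + mat_apply M (trunc n x) j * e n j) =
       (\<Sum>j. mat_apply M (trunc n x) j * trunc n x j) + (\<Sum>j. mat_apply M (trunc n x) j * e n j)"
      by (rule suminf_add[OF s1 s2, symmetric])
    finally have eq: "(\<Sum>j. mat_apply M x j * x j) = (\<Sum>j. mat_apply M (trunc n x) j * trunc n x j) + (\<Sum>j. mat_apply M (trunc n x) j * e n j)
                     + (\<Sum>j. mat_apply M (e n) j * x j)" .
    have q0': "(\<Sum>j. mat_apply M (trunc n x) j * trunc n x j) \<ge> 0" unfolding trunc_quad by (rule fin)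
    have b2: "\<bar>\<Sum>j. mat_apply M (trunc n x) j * e n j\<bar> \<le> L * l2norm x * l2norm (e n)"
    proof -
      have "\<bar>\<Sum>j. mat_apply M (trunc n x) j * e n j\<bar> \<le> l2norm (mat_apply M (trunc n x)) * l2norm (e n)"
        by (rule inner_bound[OF Myl el])
      also have "\<dots> \<le> (L * l2norm x) * l2norm (e n)"
      proof (rule mult_right_mono)
        show "l2norm (mat_apply M (trunc n x)) \<le> L * l2norm x"
          using Mx_norm[OF yl, of n] ny[of n] L0 by (meson mult_left_mono order_trans)
      qed (rule l2norm_nn[OF el])
      finally show ?thesis .
    qed
    have b3: "\<bar>\<Sum>j. mat_apply M (e n) j * x j\<bar> \<le> L * l2norm x * l2norm (e n)"
    proof -
      have "\<bar>\<Sum>j. mat_apply M (e n) j * x j\<bar> \<le> l2norm (mat_apply M (e n)) * l2norm x"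
        by (rule inner_bound[OF Mel xl])
      also have "\<dots> \<le> (L * l2norm (e n)) * l2norm x"
        by (rule mult_right_mono[OF Mx_norm[OF el]]) (rule l2norm_nn[OF xl])
      finally show ?thesis by (simp add: mult_ac)
    qed
    show ?thesis using eq q0' b2 b3 by linarith
  qed
  have en: "(\<lambda>n. l2norm (e n)) \<longlonglongrightarrow> 0"
  proof -
    have "(e n k)\<^sup>2 = (x k)\<^sup>2 - (trunc n x k)\<^sup>2" for n k unfolding e_def trunc_def by simp
    hence "(\<Sum>k. (e n k)\<^sup>2) = (\<Sum>k. (x k)\<^sup>2) - (\<Sum>k\<le>n. (x k)\<^sup>2)" for n
      using suminf_diff[OF xl yl, of n] trunc_sq[of n x] by simp
    moreover have "(\<lambda>n. (\<Sum>k\<le>n. (x k)\<^sup>2)) \<longlonglongrightarrow> (\<Sum>k. (x k)\<^sup>2)"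
      using summable_LIMSEQ'[OF xl] .
    ultimately have "(\<lambda>n. (\<Sum>k. (e n k)\<^sup>2)) \<longlonglongrightarrow> (\<Sum>k. (x k)\<^sup>2) - (\<Sum>k. (x k)\<^sup>2)"
      by (simp only:) (intro tendsto_intros)
    hence "(\<lambda>n. sqrt (\<Sum>k. (e n k)\<^sup>2)) \<longlonglongrightarrow> sqrt 0" by (intro tendsto_intros) simp
    thus ?thesis unfolding l2norm_def by simp
  qed
  have "(\<lambda>n. - (2 * L * l2norm x * l2norm (e n))) \<longlonglongrightarrow> - (2 * L * l2norm x * 0)"
    by (intro tendsto_intros en)
  hence lim2: "(\<lambda>n. - (2 * L * l2norm x * l2norm (e n))) \<longlonglongrightarrow> 0" by simp
  show "0 \<le> (\<Sum>j. mat_apply M x j * x j)"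
    by (rule tendsto_le[OF trivial_limit_sequentially tendsto_const lim2]) (auto intro: always_eventually bound)
qed

definition "NS = {l2norm (mat_apply M x) | x. l2 x \<and> l2norm x \<le> 1}"

lemma NS_bdd: "bdd_above NS"
proof (rule bdd_aboveI[of _ L])
  fix y assume "y \<in> NS"
  then obtain x where y: "y = l2norm (mat_apply M x)" and xl: "l2 x" and x1: "l2norm x \<le> 1"
    unfolding NS_def by blast
  have "y \<le> L * l2norm x" using Mx_norm xl y unfolding l2_def by simp
  also have "\<dots> \<le> L * 1" using L0 x1 by (rule mult_left_mono[rotated])
  finally show "y \<le> L" by simp
qed

lemma NS_ne: "NS \<noteq> {}"
proof -
  have "l2norm (mat_apply M (\<lambda>_. 0)) \<in> NS" unfolding NS_def l2_def l2norm_def by auto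
  thus ?thesis by blast
qed

lemma norm_NS: "mat_op_norm M = Sup NS" unfolding mat_op_norm_def NS_def ..

lemma norm_le: "mat_op_norm M \<le> L"
  unfolding norm_NS
proof (rule cSup_least[OF NS_ne])
  fix y assume "y \<in> NS"
  then obtain x where y: "y = l2norm (mat_apply M x)" and xl: "l2 x" and x1: "l2norm x \<le> 1"
    unfolding NS_def by blast
  have "y \<le> L * l2norm x" using Mx_norm xl y unfolding l2_def by simp
  also have "\<dots> \<le> L * 1" using L0 x1 by (rule mult_left_mono[rotated])
  finally show "y \<le> L" by simp
qed

lemma quad_le: "(\<Sum>j\<le>n. \<Sum>k\<le>n. M j k * \<xi> j * \<xi> k) \<le> L * (\<Sum>k\<le>n. (\<xi> k)\<^sup>2)"
proof -
  let ?x = "trunc n \<xi>"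
  have "(\<Sum>j\<le>n. \<Sum>k\<le>n. M j k * \<xi> j * \<xi> k) = (\<Sum>j. mat_apply M ?x j * ?x j)" by (rule trunc_quad[symmetric])
  also have "\<dots> \<le> l2norm (mat_apply M ?x) * l2norm ?x"
    using inner_bound[OF Mx_l2[OF trunc_l2[of n \<xi>]] trunc_l2[of n \<xi>]] by (meson abs_ge_self order_trans)
  also have "\<dots> \<le> (L * l2norm ?x) * l2norm ?x"
    by (rule mult_right_mono[OF Mx_norm[OF trunc_l2]]) (rule l2norm_nn[OF trunc_l2])
  also have "\<dots> = L * (\<Sum>k\<le>n. (\<xi> k)\<^sup>2)"
    unfolding l2norm_def using suminf_nonneg[OF trunc_l2[of n \<xi>] zero_le_power2]
    by (simp add: trunc_sq mult.assoc)
  finally show ?thesis .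
qed

lemma norm_eq:
  assumes low: "\<And>C. C < L \<Longrightarrow> \<exists>\<xi> n. (\<Sum>j\<le>n. \<Sum>k\<le>n. M j k * \<xi> j * \<xi> k) > C * (\<Sum>k\<le>n. (\<xi> k)\<^sup>2)"
  shows "mat_op_norm M = L"
proof (rule ccontr)
  assume "mat_op_norm M \<noteq> L"
  with norm_le have lt: "mat_op_norm M < L" by simp
  from low[OF lt] obtain \<xi> n where
    gt: "(\<Sum>j\<le>n. \<Sum>k\<le>n. M j k * \<xi> j * \<xi> k) > mat_op_norm M * (\<Sum>k\<le>n. (\<xi> k)\<^sup>2)" by blast
  define W where "W = (\<Sum>k\<le>n. (\<xi> k)\<^sup>2)"
  define Q where "Q = (\<Sum>j\<le>n. \<Sum>k\<le>n. M j k * \<xi> j * \<xi> k)"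
  have W0: "W \<ge> 0" unfolding W_def by (simp add: sum_nonneg)
  have "W \<noteq> 0"
  proof
    assume "W = 0"
    hence "\<xi> k = 0" if "k \<le> n" for k using that unfolding W_def
      by (subst (asm) sum_nonneg_eq_0_iff) auto
    hence "Q = 0" unfolding Q_def by simp
    with gt \<open>W = 0\<close> show False unfolding Q_def W_def by simp
  qed
  with W0 have Wp: "W > 0" by simp
  define z where "z = (\<lambda>k. trunc n \<xi> k / sqrt W)"
  have zl: "summable (\<lambda>k. (z k)\<^sup>2)" unfolding z_def power_divide
    by (rule summable_divide[OF trunc_l2])
  have zn: "l2norm z = 1" unfolding l2norm_def z_def power_divide
    using Wp suminf_divide[OF trunc_l2[of n \<xi>], of "(sqrt W)\<^sup>2"] by (simp add: trunc_sq W_def)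
  have Mz: "mat_apply M z j = mat_apply M (trunc n \<xi>) j / sqrt W" for j
    unfolding mat_apply_def z_def using row_summable[OF trunc_l2[of n \<xi>], of j]
    by (simp add: suminf_divide[symmetric] times_divide_eq_right)
  have "(\<Sum>j. mat_apply M z j * z j) = (\<Sum>j. mat_apply M (trunc n \<xi>) j * trunc n \<xi> j) / W"
  proof -
    have pt: "mat_apply M z j * z j = mat_apply M (trunc n \<xi>) j * trunc n \<xi> j / W" for j
    proof -
      have sW: "sqrt W > 0" using Wp by simp
      have a: "trunc n \<xi> j = sqrt W * z j" unfolding z_def using sW by simp
      have b: "mat_apply M (trunc n \<xi>) j = sqrt W * mat_apply M z j" using Mz[of j] sW by simp
      have "mat_apply M (trunc n \<xi>) j * trunc n \<xi> j / W = (sqrt W * sqrt W) * (mat_apply M z j * z j) / W"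
        unfolding a b by (simp add: mult_ac)
      also have "\<dots> = mat_apply M z j * z j" using Wp by simp
      finally show ?thesis ..
    qed
    have "(\<Sum>j. mat_apply M z j * z j) = (\<Sum>j. mat_apply M (trunc n \<xi>) j * trunc n \<xi> j / W)"
      by (simp only: pt)
    also have "\<dots> = (\<Sum>j. mat_apply M (trunc n \<xi>) j * trunc n \<xi> j) / W"
      by (rule suminf_divide) (rule series_CS(1)[OF Mx_l2[OF trunc_l2[of n \<xi>]] trunc_l2[of n \<xi>]])
    finally show ?thesis .
  qed
  also have "\<dots> = Q / W" unfolding trunc_quad Q_def ..
  finally have qz: "(\<Sum>j. mat_apply M z j * z j) = Q / W" .
  have "Q / W \<le> l2norm (mat_apply M z)"
    using inner_bound[OF Mx_l2[OF zl] zl] zn qz by (metis abs_ge_self order_trans mult_1_right)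
  also have "\<dots> \<le> mat_op_norm M" unfolding norm_NS
  proof (rule cSup_upper[OF _ NS_bdd])
    show "l2norm (mat_apply M z) \<in> NS" unfolding NS_def l2_def using zl zn by auto
  qed
  finally have "Q \<le> mat_op_norm M * W" using Wp by (simp add: field_simps)
  with gt show False unfolding Q_def W_def by simp
qed

end

lemma lnG_convex_comb:
  assumes "0 \<le> t" "t \<le> 1" "x > 0" "y > (0::real)"
  shows "ln (Gamma ((1 - t) * x + t * y)) \<le> (1 - t) * ln (Gamma x) + t * ln (Gamma y)"
  using convex_onD[OF log_convex_Gamma_real, of t x y] assms by simp

lemma Gamma_prod_le:
  fixes u v y1 y2 :: real
  assumes u: "u > 0" and uy1: "u \<le> y1" and uy2: "u \<le> y2" and sum: "y1 + y2 = u + v"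
  shows "Gamma y1 * Gamma y2 \<le> Gamma u * Gamma v"
proof (cases "u = v")
  case True
  hence "y1 = u" "y2 = u" using uy1 uy2 sum by auto
  thus ?thesis using True by simp
next
  case False
  have vy1: "y1 \<le> v" "y2 \<le> v" using uy1 uy2 sum by auto
  hence uv: "u < v" using False uy1 by auto
  define t where "t = (y1 - u) / (v - u)"
  have t01: "0 \<le> t" "t \<le> 1" unfolding t_def using uv uy1 vy1 by (auto simp: field_simps)
  have tt: "t * (v - u) = y1 - u" unfolding t_def using uv by simp
  have "(1 - t) * u + t * v = u + t * (v - u)" by (simp add: algebra_simps)
  hence e1: "y1 = (1 - t) * u + t * v" using tt by simp
  have e2: "y2 = (1 - (1 - t)) * u + (1 - t) * v" using e1 sum by (simp add: algebra_simps)
  have v0: "v > 0" using uv u by simp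
  have "ln (Gamma y1) \<le> (1 - t) * ln (Gamma u) + t * ln (Gamma v)"
    unfolding e1 by (rule lnG_convex_comb[OF t01 u v0])
  moreover have "ln (Gamma y2) \<le> (1 - (1 - t)) * ln (Gamma u) + (1 - t) * ln (Gamma v)"
    unfolding e2 by (rule lnG_convex_comb) (use t01 u v0 in auto)
  ultimately have "ln (Gamma y1) + ln (Gamma y2) \<le> ln (Gamma u) + ln (Gamma v)"
    by (simp add: algebra_simps)
  moreover have y1p: "y1 > 0" and y2p: "y2 > 0" using u uy1 uy2 by auto
  ultimately have "ln (Gamma y1 * Gamma y2) \<le> ln (Gamma u * Gamma v)"
    using ln_mult_pos[OF Gamma_real_pos[OF u] Gamma_real_pos[OF v0]] ln_mult_pos[OF Gamma_real_pos[OF y1p] Gamma_real_pos[OF y2p]]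
    by simp
  thus ?thesis using u v0 \<open>y1 > 0\<close> \<open>y2 > 0\<close> by simp
qed

locale params =
  fixes a b c :: real
  assumes a0: "a > 0" and b0: "b > 0" and c0: "c > 0" and s0: "b + c - a > 0"
begin

definition dd :: "nat \<Rightarrow> real" where
  "dd k = Gamma (real k + b) * Gamma (real k + c) / (Gamma (real k + a) * fact k)"

definition Aq :: "nat \<Rightarrow> real" where
  "Aq m = Gamma (real m + a) / Gamma (real m + b + c)"

definition pp :: "real \<Rightarrow> nat \<Rightarrow> real" where
  "pp \<beta> k = Gamma (real k + \<beta>) / fact k"

definition GG :: "real \<Rightarrow> real" where
  "GG \<beta> = Gamma \<beta> * Gamma (b + c - a - \<beta>) / Gamma (b + c - a)"

lemma dd_pos: "dd k > 0"
  unfolding dd_def using a0 b0 c0 by (intro divide_pos_pos mult_pos_pos) auto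

lemma Aq_pos: "Aq m > 0"
  unfolding Aq_def using a0 b0 c0 by (intro divide_pos_pos) auto

lemma pp_pos: "\<beta> > 0 \<Longrightarrow> pp \<beta> k > 0"
  unfolding pp_def by (intro divide_pos_pos) auto

lemma GG_pos: "\<beta> > 0 \<Longrightarrow> \<beta> < b + c - a \<Longrightarrow> GG \<beta> > 0"
  unfolding GG_def using s0 by (intro divide_pos_pos mult_pos_pos) auto

lemma Bmat_eq: "Bmat a b c j k = Aq (j + k) * sqrt (dd j) * sqrt (dd k)"
proof -
  have "(Gamma (real j + b) * Gamma (real j + c) * Gamma (real k + b) * Gamma (real k + c)) /
           (Gamma (real j + a) * fact j * Gamma (real k + a) * fact k) = dd j * dd k"
    unfolding dd_def by (simp add: field_simps)
  thus ?thesis unfolding Bmat_def Aq_def by (simp add: real_sqrt_mult mult.assoc)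
qed

lemma row_gauss:
  assumes b1: "\<beta> > 0" and b2: "\<beta> < b + c - a"
  shows "(\<lambda>k. Aq (j + k) * pp \<beta> k) sums (GG \<beta> * Gamma (real j + a) / Gamma (real j + b + c - \<beta>))"
proof -
  have g: "(real j + b + c) - (real j + a) - \<beta> > 0" using b2 by simp
  have ja: "real j + a > 0" using a0 by simp
  from gauss_sum[OF ja b1 g]
  have "(\<lambda>k. Gamma (real k + (real j + a)) / Gamma (real k + (real j + b + c)) * (Gamma (real k + \<beta>) / fact k)) sums
    (Gamma (real j + a) * Gamma \<beta> * Gamma (real j + b + c - (real j + a) - \<beta>) /
     (Gamma (real j + b + c - (real j + a)) * Gamma (real j + b + c - \<beta>)))" .
  moreover have "Gamma (real k + (real j + a)) / Gamma (real k + (real j + b + c)) * (Gamma (real k + \<beta>) / fact k)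
      = Aq (j + k) * pp \<beta> k" for k
    unfolding Aq_def pp_def by (simp add: add_ac)
  moreover have "(Gamma (real j + a) * Gamma \<beta> * Gamma (real j + b + c - (real j + a) - \<beta>) /
     (Gamma (real j + b + c - (real j + a)) * Gamma (real j + b + c - \<beta>))) =
     GG \<beta> * Gamma (real j + a) / Gamma (real j + b + c - \<beta>)"
    unfolding GG_def by (simp add: algebra_simps)
  ultimately show ?thesis by simp
qed

definition qv :: "real \<Rightarrow> nat \<Rightarrow> real" where
  "qv \<beta> k = pp \<beta> k / sqrt (dd k)"

lemma schur_inst:
  assumes b1: "\<beta> > 0" and b2: "\<beta> < b + c - a"
    and cmp: "\<And>j. Gamma (real j + b) * Gamma (real j + c) \<le> Gamma (real j + \<beta>) * Gamma (real j + b + c - \<beta>)"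
  shows "schur (Bmat a b c) (qv \<beta>) (GG \<beta>)"
proof
  show "Bmat a b c j k \<ge> 0" for j k
    unfolding Bmat_eq using Aq_pos dd_pos by (simp add: less_imp_le)
  show "Bmat a b c j k = Bmat a b c k j" for j k
    unfolding Bmat_eq by (simp add: add.commute mult_ac)
  show "qv \<beta> k > 0" for k unfolding qv_def using pp_pos[OF b1] dd_pos by simp
  have eq: "Bmat a b c j k * qv \<beta> k = sqrt (dd j) * (Aq (j + k) * pp \<beta> k)" for j k
    unfolding Bmat_eq qv_def using dd_pos[of k] by (simp add: field_simps)
  have rs: "(\<lambda>k. Bmat a b c j k * qv \<beta> k) sums (sqrt (dd j) * (GG \<beta> * Gamma (real j + a) / Gamma (real j + b + c - \<beta>)))" for j
    unfolding eq by (intro sums_mult row_gauss b1 b2)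
  show "summable (\<lambda>k. Bmat a b c j k * qv \<beta> k)" for j using rs by (rule sums_summable)
  show "(\<Sum>k. Bmat a b c j k * qv \<beta> k) \<le> GG \<beta> * qv \<beta> j" for j
  proof -
    have g1: "Gamma (real j + b + c - \<beta>) > 0" using b2 a0 by simp
    have g2: "Gamma (real j + a) > 0" using a0 by simp
    have dj: "dd j > 0" by (rule dd_pos)
    have "dd j * Gamma (real j + a) / Gamma (real j + b + c - \<beta>) \<le> pp \<beta> j"
    proof -
      have "dd j * Gamma (real j + a) / Gamma (real j + b + c - \<beta>) =
            Gamma (real j + b) * Gamma (real j + c) / (fact j * Gamma (real j + b + c - \<beta>))"
        unfolding dd_def using g2 by (simp add: field_simps)
      also have "\<dots> \<le> Gamma (real j + \<beta>) * Gamma (real j + b + c - \<beta>) / (fact j * Gamma (real j + b + c - \<beta>))"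
        using g1 by (intro divide_right_mono cmp) simp
      also have "\<dots> = pp \<beta> j" unfolding pp_def using g1 by simp
      finally show ?thesis .
    qed
    hence "sqrt (dd j) * (GG \<beta> * Gamma (real j + a) / Gamma (real j + b + c - \<beta>)) \<le> GG \<beta> * qv \<beta> j"
      unfolding qv_def using dj GG_pos[OF b1 b2] g1
      by (simp add: field_simps real_sqrt_mult[symmetric])
    thus ?thesis using rs[of j] by (simp add: sums_iff)
  qed
qed

end

context params begin

lemma canc_aux: "y \<noteq> 0 \<Longrightarrow> x * y / z / y = x / (z::real)"
  by (simp add: field_simps)

lemma Aq_integral:
  "((\<lambda>t. t powr (a - 1) * (1 - t) powr (b + c - a - 1) / Gamma (b + c - a) * t ^ m) has_integral Aq m) {0<..<1}"
proof -
  have "((\<lambda>t. t powr (real m + a - 1) * (1 - t) powr (b + c - a - 1)) has_integral Beta (real m + a) (b + c - a)) {0<..<1}"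
    using has_integral_Beta_real[of "real m + a" "b + c - a"] a0 s0 by (simp add: has_integral_Icc_iff_Ioo)
  from has_integral_mult_right[OF this, of "1 / Gamma (b + c - a)"]
  have i: "((\<lambda>t. t powr (real m + a - 1) * (1 - t) powr (b + c - a - 1) / Gamma (b + c - a)) has_integral
          Beta (real m + a) (b + c - a) / Gamma (b + c - a)) {0<..<1}" by simp
  have val: "Beta (real m + a) (b + c - a) / Gamma (b + c - a) = Aq m"
  proof -
    have e: "real m + a + (b + c - a) = real m + b + c" by simp
    have ne: "Gamma (b + c - a) \<noteq> 0" using Gamma_real_pos[OF s0] by simp
    show ?thesis unfolding Beta_def Aq_def e using ne by (rule canc_aux)
  qed
  have eq: "t powr (real m + a - 1) * (1 - t) powr (b + c - a - 1) / Gamma (b + c - a) =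
      t powr (a - 1) * (1 - t) powr (b + c - a - 1) / Gamma (b + c - a) * t ^ m" if "t \<in> {0<..<1}" for t
  proof -
    have "t powr (real m + a - 1) = t ^ m * t powr (a - 1)"
      using that by (simp add: powr_add[symmetric] powr_realpow[symmetric] algebra_simps)
    thus ?thesis by simp
  qed
  from i have i2: "((\<lambda>t. t powr (real m + a - 1) * (1 - t) powr (b + c - a - 1) / Gamma (b + c - a)) has_integral Aq m) {0<..<1}"
    by (simp only: val)
  show ?thesis by (rule has_integral_eq[OF eq i2])
qed

lemma quad_nonneg: "0 \<le> (\<Sum>j\<le>n. \<Sum>k\<le>n. Aq (j + k) * \<eta> j * \<eta> k)"
proof -
  define \<phi> where "\<phi> t = t powr (a - 1) * (1 - t) powr (b + c - a - 1) / Gamma (b + c - a)" for t :: real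
  have i: "((\<lambda>t. \<Sum>j\<le>n. \<Sum>k\<le>n. \<phi> t * t ^ (j + k) * \<eta> j * \<eta> k) has_integral
           (\<Sum>j\<le>n. \<Sum>k\<le>n. Aq (j + k) * \<eta> j * \<eta> k)) {0<..<1}"
  proof (intro has_integral_sum)
    fix j k
    show "((\<lambda>t. \<phi> t * t ^ (j + k) * \<eta> j * \<eta> k) has_integral Aq (j + k) * \<eta> j * \<eta> k) {0<..<1}"
      by (intro has_integral_mult_left) (unfold \<phi>_def, rule Aq_integral)
  qed (rule finite_atMost)+
  have nn: "0 \<le> (\<Sum>j\<le>n. \<Sum>k\<le>n. \<phi> t * t ^ (j + k) * \<eta> j * \<eta> k)" if "t \<in> {0<..<1}" for t
  proof -
    have tm: "\<phi> t * t ^ (j + k) * \<eta> j * \<eta> k = \<phi> t * ((\<eta> j * t ^ j) * (\<eta> k * t ^ k))" for j k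
      by (simp only: power_add mult_ac)
    have "(\<Sum>j\<le>n. \<Sum>k\<le>n. \<phi> t * t ^ (j + k) * \<eta> j * \<eta> k) = (\<Sum>j\<le>n. \<Sum>k\<le>n. \<phi> t * ((\<eta> j * t ^ j) * (\<eta> k * t ^ k)))"
      by (simp only: tm)
    also have "\<dots> = \<phi> t * (\<Sum>j\<le>n. \<Sum>k\<le>n. (\<eta> j * t ^ j) * (\<eta> k * t ^ k))"
      by (simp only: sum_distrib_left)
    also have "\<dots> = \<phi> t * ((\<Sum>j\<le>n. \<eta> j * t ^ j) * (\<Sum>k\<le>n. \<eta> k * t ^ k))"
      by (simp only: sum_product)
    finally have "(\<Sum>j\<le>n. \<Sum>k\<le>n. \<phi> t * t ^ (j + k) * \<eta> j * \<eta> k) = \<phi> t * ((\<Sum>j\<le>n. \<eta> j * t ^ j) * (\<Sum>k\<le>n. \<eta> k * t ^ k))" .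
    also have "\<dots> = \<phi> t * (\<Sum>j\<le>n. \<eta> j * t ^ j)\<^sup>2" by (simp add: power2_eq_square)
    also have "\<dots> \<ge> 0"
    proof -
      have "\<phi> t \<ge> 0" unfolding \<phi>_def using Gamma_real_pos[OF s0] by simp
      thus ?thesis by simp
    qed
    finally show ?thesis .
  qed
  show ?thesis by (rule has_integral_nonneg[OF i]) (use nn in blast)
qed

lemma conv_B: "(\<Sum>j\<le>n. \<Sum>k\<le>n. Bmat a b c j k * \<xi> j * \<xi> k) =
               (\<Sum>j\<le>n. \<Sum>k\<le>n. Aq (j + k) * (\<xi> j * sqrt (dd j)) * (\<xi> k * sqrt (dd k)))"
  unfolding Bmat_eq by (intro sum.cong refl) (simp add: mult_ac)

lemma conv_B': "(\<Sum>j\<le>n. \<Sum>k\<le>n. Bmat a b c j k * (\<eta> j / sqrt (dd j)) * (\<eta> k / sqrt (dd k))) =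
               (\<Sum>j\<le>n. \<Sum>k\<le>n. Aq (j + k) * \<eta> j * \<eta> k)"
proof -
  have h: "x / sqrt (dd k) * sqrt (dd k) = x" for x k using dd_pos[of k] by simp
  show ?thesis unfolding conv_B h ..
qed

lemma conv_W: "(\<Sum>k\<le>n. (\<eta> k / sqrt (dd k))\<^sup>2) = (\<Sum>k\<le>n. (\<eta> k)\<^sup>2 / dd k)"
proof -
  have h: "(x / sqrt (dd k))\<^sup>2 = x\<^sup>2 / dd k" for x k using dd_pos[of k] by (simp add: power_divide)
  show ?thesis unfolding h ..
qed

lemma stmt_Q: "(\<Sum>j\<le>n. \<Sum>k\<le>n. Gamma (real (j + k) + a) / Gamma (real (j + k) + b + c) * \<eta> j * \<eta> k) =
    (\<Sum>j\<le>n. \<Sum>k\<le>n. Aq (j + k) * \<eta> j * \<eta> k)"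
  unfolding Aq_def ..

lemma stmt_W: "(\<Sum>k\<le>n. Gamma (real k + a) * fact k / (Gamma (real k + b) * Gamma (real k + c)) * (\<eta> k)\<^sup>2) =
    (\<Sum>k\<le>n. (\<eta> k)\<^sup>2 / dd k)"
proof -
  have h: "Gamma (real k + a) * fact k / (Gamma (real k + b) * Gamma (real k + c)) * x = x / dd k" for k x
    unfolding dd_def by simp
  show ?thesis unfolding h ..
qed

lemma core:
  assumes b1: "\<beta> > 0" and b2: "\<beta> < b + c - a"
    and cmp: "\<And>j. Gamma (real j + b) * Gamma (real j + c) \<le> Gamma (real j + \<beta>) * Gamma (real j + b + c - \<beta>)"
    and low: "\<And>C. C < GG \<beta> \<Longrightarrow> \<exists>\<eta> n. (\<Sum>j\<le>n. \<Sum>k\<le>n. Aq (j + k) * \<eta> j * \<eta> k) > C * (\<Sum>k\<le>n. (\<eta> k)\<^sup>2 / dd k)"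
  shows "bounded_mat_op (Bmat a b c) \<and> positive_mat_op (Bmat a b c) \<and> mat_op_norm (Bmat a b c) = GG \<beta>
    \<and> (\<forall>(\<xi>::nat \<Rightarrow> real) (n::nat).
         0 \<le> (\<Sum>j\<le>n. \<Sum>k\<le>n. Gamma (real (j + k) + a) / Gamma (real (j + k) + b + c) * \<xi> j * \<xi> k)
       \<and> (\<Sum>j\<le>n. \<Sum>k\<le>n. Gamma (real (j + k) + a) / Gamma (real (j + k) + b + c) * \<xi> j * \<xi> k)
           \<le> mat_op_norm (Bmat a b c) *
             (\<Sum>k\<le>n. Gamma (real k + a) * fact k / (Gamma (real k + b) * Gamma (real k + c)) * (\<xi> k)\<^sup>2))
    \<and> (\<forall>C < mat_op_norm (Bmat a b c). \<exists>(\<xi>::nat \<Rightarrow> real) (n::nat).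
         (\<Sum>j\<le>n. \<Sum>k\<le>n. Gamma (real (j + k) + a) / Gamma (real (j + k) + b + c) * \<xi> j * \<xi> k)
           > C * (\<Sum>k\<le>n. Gamma (real k + a) * fact k / (Gamma (real k + b) * Gamma (real k + c)) * (\<xi> k)\<^sup>2))"
proof -
  interpret schur "Bmat a b c" "qv \<beta>" "GG \<beta>" by (rule schur_inst[OF b1 b2 cmp])
  have nrm: "mat_op_norm (Bmat a b c) = GG \<beta>"
  proof (rule norm_eq)
    fix C assume "C < GG \<beta>"
    from low[OF this] obtain \<eta> n where "(\<Sum>j\<le>n. \<Sum>k\<le>n. Aq (j + k) * \<eta> j * \<eta> k) > C * (\<Sum>k\<le>n. (\<eta> k)\<^sup>2 / dd k)"
      by blast
    hence "(\<Sum>j\<le>n. \<Sum>k\<le>n. Bmat a b c j k * (\<eta> j / sqrt (dd j)) * (\<eta> k / sqrt (dd k))) >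
           C * (\<Sum>k\<le>n. (\<eta> k / sqrt (dd k))\<^sup>2)"
      unfolding conv_B' conv_W .
    thus "\<exists>\<xi> n. (\<Sum>j\<le>n. \<Sum>k\<le>n. Bmat a b c j k * \<xi> j * \<xi> k) > C * (\<Sum>k\<le>n. (\<xi> k)\<^sup>2)"
      by (intro exI[of _ "\<lambda>k. \<eta> k / sqrt (dd k)"] exI[of _ n])
  qed
  have pos: "positive_mat_op (Bmat a b c)"
  proof (rule positive)
    fix n \<xi> show "0 \<le> (\<Sum>j\<le>n. \<Sum>k\<le>n. Bmat a b c j k * \<xi> j * \<xi> k)"
      unfolding conv_B by (rule quad_nonneg)
  qed
  have ineq: "(\<Sum>j\<le>n. \<Sum>k\<le>n. Aq (j + k) * \<eta> j * \<eta> k) \<le> GG \<beta> * (\<Sum>k\<le>n. (\<eta> k)\<^sup>2 / dd k)" for \<eta> n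
    using quad_le[where n=n and \<xi>="\<lambda>k. \<eta> k / sqrt (dd k)"] unfolding conv_B' conv_W .
  have low': "\<forall>C < GG \<beta>. \<exists>(\<xi>::nat \<Rightarrow> real) (n::nat).
      (\<Sum>j\<le>n. \<Sum>k\<le>n. Aq (j + k) * \<xi> j * \<xi> k) > C * (\<Sum>k\<le>n. (\<xi> k)\<^sup>2 / dd k)"
    using low by blast
  show ?thesis
    unfolding stmt_Q stmt_W nrm
  proof (intro conjI)
    show "bounded_mat_op (Bmat a b c)" by (rule bounded)
    show "positive_mat_op (Bmat a b c)" by (rule pos)
    show "GG \<beta> = GG \<beta>" by (rule refl)
    show "\<forall>\<xi> n. 0 \<le> (\<Sum>j\<le>n. \<Sum>k\<le>n. Aq (j + k) * \<xi> j * \<xi> k) \<and>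
       (\<Sum>j\<le>n. \<Sum>k\<le>n. Aq (j + k) * \<xi> j * \<xi> k) \<le> GG \<beta> * (\<Sum>k\<le>n. (\<xi> k)\<^sup>2 / dd k)"
      using quad_nonneg ineq by blast
    show "\<forall>C < GG \<beta>. \<exists>(\<xi>::nat \<Rightarrow> real) (n::nat).
      (\<Sum>j\<le>n. \<Sum>k\<le>n. Aq (j + k) * \<xi> j * \<xi> k) > C * (\<Sum>k\<le>n. (\<xi> k)\<^sup>2 / dd k)"
      by (rule low')
  qed
qed

end

context params begin

definition rho :: "real \<Rightarrow> nat \<Rightarrow> real" where
  "rho \<beta> j = Gamma (real j + a) / Gamma (real j + b + c - \<beta>)"

definition S1 :: "real \<Rightarrow> real" where
  "S1 \<beta> = Gamma a * Gamma \<beta> * Gamma (b + c - a - 2 * \<beta>) / (Gamma (b + c - a - \<beta>) * Gamma (b + c - 2 * \<beta>))"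

lemma S1_sums:
  assumes b1: "\<beta> > 0" and b2: "2 * \<beta> < b + c - a"
  shows "(\<lambda>j. pp \<beta> j * rho \<beta> j) sums S1 \<beta>"
proof -
  have g: "(b + c - \<beta>) - a - \<beta> > 0" using b2 by simp
  from gauss_sum[OF a0 b1 g]
  have "(\<lambda>k. Gamma (real k + a) / Gamma (real k + (b + c - \<beta>)) * (Gamma (real k + \<beta>) / fact k)) sums
      (Gamma a * Gamma \<beta> * Gamma (b + c - \<beta> - a - \<beta>) / (Gamma (b + c - \<beta> - a) * Gamma (b + c - \<beta> - \<beta>)))" .
  moreover have "Gamma (real k + a) / Gamma (real k + (b + c - \<beta>)) * (Gamma (real k + \<beta>) / fact k) = pp \<beta> k * rho \<beta> k" for k
  proof -
    have e: "real k + (b + c - \<beta>) = real k + b + c - \<beta>" by simp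
    show ?thesis unfolding pp_def rho_def e by (rule mult.commute)
  qed
  moreover have e: "b + c - \<beta> - a - \<beta> = b + c - a - 2 * \<beta>" "b + c - \<beta> - a = b + c - a - \<beta>" "b + c - \<beta> - \<beta> = b + c - 2 * \<beta>"
    by simp_all
  ultimately show ?thesis unfolding S1_def by (simp only: e)
qed

lemma rho_pos: "\<beta> < b + c - a \<Longrightarrow> rho \<beta> j > 0"
  unfolding rho_def using a0 by (intro divide_pos_pos) auto

lemma lowgen:
  assumes b1: "\<beta> > 0" and b2: "2 * \<beta> < b + c - a" and K0: "K \<ge> 0" and C0: "C \<ge> 0"
    and rb: "\<And>j. j \<ge> m \<Longrightarrow> (pp \<beta> j)\<^sup>2 / dd j \<le> K * (pp \<beta> j * rho \<beta> j)"
    and gap: "GG \<beta> * S1 \<beta> > C * ((\<Sum>j<m. (pp \<beta> j)\<^sup>2 / dd j) + K * S1 \<beta>)"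
  shows "\<exists>\<eta> n. (\<Sum>j\<le>n. \<Sum>k\<le>n. Aq (j + k) * \<eta> j * \<eta> k) > C * (\<Sum>k\<le>n. (\<eta> k)\<^sup>2 / dd k)"
proof -
  have bs: "\<beta> < b + c - a" using b1 b2 by simp
  define H where "H = (\<Sum>j<m. (pp \<beta> j)\<^sup>2 / dd j)"
  define T where "T = C * (H + K * S1 \<beta>)"
  have ss: "(\<lambda>j. pp \<beta> j * rho \<beta> j) sums S1 \<beta>" by (rule S1_sums[OF b1 b2])
  have pr0: "pp \<beta> j * rho \<beta> j \<ge> 0" for j using pp_pos[OF b1] rho_pos[OF bs] by (simp add: less_imp_le)
  have Wb: "(\<Sum>k\<le>n. (pp \<beta> k)\<^sup>2 / dd k) \<le> H + K * S1 \<beta>" for n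
  proof -
    have tb: "(pp \<beta> k)\<^sup>2 / dd k \<le> (if k \<in> {..<m} then (pp \<beta> k)\<^sup>2 / dd k else 0) + K * (pp \<beta> k * rho \<beta> k)" for k
    proof (cases "k \<in> {..<m}")
      case True thus ?thesis using K0 pr0[of k] by simp
    next
      case False thus ?thesis using rb[of k] by simp
    qed
    have "(\<Sum>k\<le>n. (pp \<beta> k)\<^sup>2 / dd k) \<le> (\<Sum>k\<le>n. (if k \<in> {..<m} then (pp \<beta> k)\<^sup>2 / dd k else 0) + K * (pp \<beta> k * rho \<beta> k))"
      by (rule sum_mono) (rule tb)
    also have "\<dots> = (\<Sum>k\<le>n. (if k \<in> {..<m} then (pp \<beta> k)\<^sup>2 / dd k else 0)) + K * (\<Sum>k\<le>n. pp \<beta> k * rho \<beta> k)"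
      by (simp only: sum.distrib sum_distrib_left)
    also have "(\<Sum>k\<le>n. (if k \<in> {..<m} then (pp \<beta> k)\<^sup>2 / dd k else 0)) \<le> H"
    proof -
      have "(\<Sum>k\<le>n. (if k \<in> {..<m} then (pp \<beta> k)\<^sup>2 / dd k else 0)) = (\<Sum>k\<in>{..n} \<inter> {..<m}. (pp \<beta> k)\<^sup>2 / dd k)"
        by (rule sum.inter_restrict[symmetric]) simp
      also have "\<dots> \<le> H" unfolding H_def
        using dd_pos by (intro sum_mono2) (auto intro: divide_nonneg_pos)
      finally show ?thesis .
    qed
    also have "(\<Sum>k\<le>n. pp \<beta> k * rho \<beta> k) \<le> S1 \<beta>"
    proof -
      have "(\<Sum>k\<le>n. pp \<beta> k * rho \<beta> k) \<le> (\<Sum>k. pp \<beta> k * rho \<beta> k)"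
        by (rule sum_le_suminf) (use ss pr0 in \<open>auto simp: sums_iff\<close>)
      thus ?thesis using sums_unique[OF ss] by simp
    qed
    finally show ?thesis using K0 by (simp add: mult_left_mono add_mono)
  qed
  have TS: "T < GG \<beta> * S1 \<beta>" unfolding T_def H_def using gap .
  define R where "R j = pp \<beta> j * (GG \<beta> * rho \<beta> j)" for j
  have Rs: "R sums (GG \<beta> * S1 \<beta>)"
    unfolding R_def using sums_mult[OF ss, of "GG \<beta>"] by (simp add: mult_ac)
  have "eventually (\<lambda>M. (\<Sum>j<M. R j) > T) sequentially"
    using Rs TS unfolding sums_def by (rule order_tendstoD)
  then obtain M where M: "(\<Sum>j<M. R j) > T" by (meson eventually_sequentially order_refl)
  have rowlim: "(\<lambda>n. \<Sum>k\<le>n. Aq (j + k) * pp \<beta> k) \<longlonglongrightarrow> GG \<beta> * rho \<beta> j" for j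
  proof -
    have rg: "(\<lambda>k. Aq (j + k) * pp \<beta> k) sums (GG \<beta> * rho \<beta> j)"
      using row_gauss[OF b1 bs, of j] unfolding rho_def by (simp only: times_divide_eq_right)
    show ?thesis using summable_LIMSEQ'[OF sums_summable[OF rg]] unfolding sums_unique[OF rg, symmetric] .
  qed
  have "(\<lambda>n. \<Sum>j<M. pp \<beta> j * (\<Sum>k\<le>n. Aq (j + k) * pp \<beta> k)) \<longlonglongrightarrow> (\<Sum>j<M. R j)"
    unfolding R_def by (intro tendsto_intros rowlim)
  hence "eventually (\<lambda>n. (\<Sum>j<M. pp \<beta> j * (\<Sum>k\<le>n. Aq (j + k) * pp \<beta> k)) > T) sequentially"
    using M by (rule order_tendstoD)
  then obtain n0 where n0: "\<And>n. n \<ge> n0 \<Longrightarrow> (\<Sum>j<M. pp \<beta> j * (\<Sum>k\<le>n. Aq (j + k) * pp \<beta> k)) > T"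
    unfolding eventually_sequentially by blast
  define n where "n = max n0 M"
  have "T < (\<Sum>j<M. pp \<beta> j * (\<Sum>k\<le>n. Aq (j + k) * pp \<beta> k))" using n0[of n] unfolding n_def by simp
  also have "\<dots> \<le> (\<Sum>j\<le>n. pp \<beta> j * (\<Sum>k\<le>n. Aq (j + k) * pp \<beta> k))"
  proof (rule sum_mono2)
    show "{..<M} \<subseteq> {..n}" unfolding n_def by auto
    show "0 \<le> pp \<beta> j * (\<Sum>k\<le>n. Aq (j + k) * pp \<beta> k)" for j
      using pp_pos[OF b1] Aq_pos by (intro mult_nonneg_nonneg sum_nonneg) (auto intro: less_imp_le)
  qed simp
  also have "\<dots> = (\<Sum>j\<le>n. \<Sum>k\<le>n. Aq (j + k) * pp \<beta> j * pp \<beta> k)"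
    by (simp add: sum_distrib_left mult_ac)
  finally have Q: "T < (\<Sum>j\<le>n. \<Sum>k\<le>n. Aq (j + k) * pp \<beta> j * pp \<beta> k)" .
  have "C * (\<Sum>k\<le>n. (pp \<beta> k)\<^sup>2 / dd k) \<le> T" unfolding T_def by (rule mult_left_mono[OF Wb C0])
  with Q show ?thesis by (intro exI[of _ "pp \<beta>"] exI[of _ n]) simp
qed

end

lemma pos_nonpos_Ints: "(x::real) > 0 \<Longrightarrow> x \<notin> \<int>\<^sub>\<le>\<^sub>0"
  by (auto elim!: nonpos_Ints_cases)

lemma lnGamma_step: "(x::real) > 0 \<Longrightarrow> ln (Gamma (x + 1)) = ln x + ln (Gamma x)"
  using Gamma_plus1[OF pos_nonpos_Ints, of x] by (simp add: ln_mult_pos)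

lemma Gamma_ratio_bound:
  fixes u v y1 y2 :: real
  assumes u1: "u > 1" and uy1: "u \<le> y1" and y12: "y1 \<le> y2" and sum: "y1 + y2 = u + v"
  shows "Gamma u * Gamma v \<le> Gamma y1 * Gamma y2 * (v / (u - 1)) powr (y1 - u)"
proof -
  define f where "f x = ln (Gamma x)" for x :: real
  define \<delta> where "\<delta> = y1 - u"
  have d0: "\<delta> \<ge> 0" unfolding \<delta>_def using uy1 by simp
  have vy2: "v - y2 = \<delta>" unfolding \<delta>_def using sum by simp
  have pos: "u - 1 > 0" "u > 0" "y1 > 0" "y2 > 0" "v > 0" "v + 1 > 0" using u1 uy1 y12 vy2 d0 by auto
  have c1: "(1 + \<delta>) * f u \<le> \<delta> * f (u - 1) + f y1"
  proof -
    define t where "t = 1 / (1 + \<delta>)"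
    have t01: "0 \<le> t" "t \<le> 1" unfolding t_def using d0 by auto
    have "(1 - t) * (u - 1) + t * y1 = u"
    proof -
      have "(1 - t) * (u - 1) + t * y1 = u - 1 + t * (1 + \<delta>)" unfolding \<delta>_def by (simp add: algebra_simps)
      also have "t * (1 + \<delta>) = 1" unfolding t_def using d0 by simp
      finally show ?thesis by simp
    qed
    hence "f u \<le> (1 - t) * f (u - 1) + t * f y1"
      unfolding f_def using lnG_convex_comb[OF t01 pos(1) pos(3)] by simp
    hence "(1 + \<delta>) * f u \<le> (1 + \<delta>) * ((1 - t) * f (u - 1) + t * f y1)"
      using d0 by (intro mult_left_mono) auto
    also have "(1 + \<delta>) * ((1 - t) * f (u - 1) + t * f y1) = \<delta> * f (u - 1) + f y1"
    proof -
      have nz: "1 + \<delta> \<noteq> 0" using d0 by simp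
      have e1: "(1 + \<delta>) * (1 - t) = \<delta>" unfolding t_def using nz by (simp add: field_simps)
      have e2: "(1 + \<delta>) * t = 1" unfolding t_def using nz by simp
      have "(1 + \<delta>) * ((1 - t) * f (u - 1) + t * f y1) = ((1 + \<delta>) * (1 - t)) * f (u - 1) + ((1 + \<delta>) * t) * f y1"
        by (simp only: distrib_left mult.assoc)
      thus ?thesis unfolding e1 e2 by simp
    qed
    finally show ?thesis .
  qed
  have c2: "(1 + \<delta>) * f v \<le> f y2 + \<delta> * f (v + 1)"
  proof -
    define t where "t = \<delta> / (1 + \<delta>)"
    have t01: "0 \<le> t" "t \<le> 1" unfolding t_def using d0 by auto
    have "(1 - t) * y2 + t * (v + 1) = v"
    proof -
      have "(1 - t) * y2 + t * (v + 1) = y2 + t * (1 + \<delta>)" using vy2 by (simp add: algebra_simps)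
      also have "t * (1 + \<delta>) = \<delta>" unfolding t_def using d0 by simp
      finally show ?thesis using vy2 by simp
    qed
    hence "f v \<le> (1 - t) * f y2 + t * f (v + 1)"
      unfolding f_def using lnG_convex_comb[OF t01 pos(4) pos(6)] by simp
    hence "(1 + \<delta>) * f v \<le> (1 + \<delta>) * ((1 - t) * f y2 + t * f (v + 1))"
      using d0 by (intro mult_left_mono) auto
    also have "(1 + \<delta>) * ((1 - t) * f y2 + t * f (v + 1)) = f y2 + \<delta> * f (v + 1)"
    proof -
      have nz: "1 + \<delta> \<noteq> 0" using d0 by simp
      have e1: "(1 + \<delta>) * (1 - t) = 1" unfolding t_def using nz by (simp add: field_simps)
      have e2: "(1 + \<delta>) * t = \<delta>" unfolding t_def using nz by simp
      have "(1 + \<delta>) * ((1 - t) * f y2 + t * f (v + 1)) = ((1 + \<delta>) * (1 - t)) * f y2 + ((1 + \<delta>) * t) * f (v + 1)"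
        by (simp only: distrib_left mult.assoc)
      thus ?thesis unfolding e1 e2 by simp
    qed
    finally show ?thesis .
  qed
  have fu: "f u = ln (u - 1) + f (u - 1)" unfolding f_def using lnGamma_step[OF pos(1)] by simp
  have fv: "f (v + 1) = ln v + f v" unfolding f_def using lnGamma_step[OF pos(5)] by simp
  have key: "f u + f v \<le> f y1 + f y2 + \<delta> * (ln v - ln (u - 1))"
    using c1 c2 unfolding fu fv by (simp add: algebra_simps)
  have "ln (Gamma u * Gamma v) \<le> ln (Gamma y1 * Gamma y2 * (v / (u - 1)) powr \<delta>)"
  proof -
    have "ln (Gamma u * Gamma v) = f u + f v" unfolding f_def
      using pos by (simp add: ln_mult_pos)
    moreover have "ln (Gamma y1 * Gamma y2 * (v / (u - 1)) powr \<delta>) = f y1 + f y2 + \<delta> * (ln v - ln (u - 1))"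
      unfolding f_def using pos by (simp add: ln_mult_pos ln_powr ln_div)
    ultimately show ?thesis using key by simp
  qed
  hence "Gamma u * Gamma v \<le> Gamma y1 * Gamma y2 * (v / (u - 1)) powr \<delta>"
    using pos by (subst (asm) ln_le_cancel_iff) auto
  thus ?thesis unfolding \<delta>_def .
qed

context params begin

lemma lowwrap:
  assumes G0: "G > 0"
    and H: "\<And>C'. 0 \<le> C' \<Longrightarrow> C' < G \<Longrightarrow> \<exists>\<eta> n. (\<Sum>j\<le>n. \<Sum>k\<le>n. Aq (j + k) * \<eta> j * \<eta> k) > C' * (\<Sum>k\<le>n. (\<eta> k)\<^sup>2 / dd k)"
    and C: "C < G"
  shows "\<exists>\<eta> n. (\<Sum>j\<le>n. \<Sum>k\<le>n. Aq (j + k) * \<eta> j * \<eta> k) > C * (\<Sum>k\<le>n. (\<eta> k)\<^sup>2 / dd k)"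
proof -
  have "0 \<le> max C 0" "max C 0 < G" using G0 C by auto
  from H[OF this] obtain \<eta> n where q: "(\<Sum>j\<le>n. \<Sum>k\<le>n. Aq (j + k) * \<eta> j * \<eta> k) > max C 0 * (\<Sum>k\<le>n. (\<eta> k)\<^sup>2 / dd k)"
    by blast
  have W0: "(\<Sum>k\<le>n. (\<eta> k)\<^sup>2 / dd k) \<ge> 0" using dd_pos by (intro sum_nonneg divide_nonneg_pos) auto
  have "C * (\<Sum>k\<le>n. (\<eta> k)\<^sup>2 / dd k) \<le> max C 0 * (\<Sum>k\<le>n. (\<eta> k)\<^sup>2 / dd k)"
    by (rule mult_right_mono[OF _ W0]) simp
  with q show ?thesis by (intro exI[of _ \<eta>] exI[of _ n]) simp
qed

lemma pp_dd: "pp \<beta> j / dd j = Gamma (real j + \<beta>) * Gamma (real j + a) / (Gamma (real j + b) * Gamma (real j + c))"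
proof -
  have f: "fact j \<noteq> (0::real)" by simp
  have p: "real j + b > 0" "real j + c > 0" using b0 c0 by auto
  have g: "Gamma (real j + b) \<noteq> 0" "Gamma (real j + c) \<noteq> 0"
    using Gamma_real_pos[OF p(1)] Gamma_real_pos[OF p(2)] by auto
  show ?thesis unfolding pp_def dd_def using f g by (simp add: field_simps)
qed

lemma low2:
  assumes cab: "a + b - c < 0"
  shows "C < GG b \<Longrightarrow> \<exists>\<eta> n. (\<Sum>j\<le>n. \<Sum>k\<le>n. Aq (j + k) * \<eta> j * \<eta> k) > C * (\<Sum>k\<le>n. (\<eta> k)\<^sup>2 / dd k)"
proof (rule lowwrap)
  have bs: "b < b + c - a" using cab a0 b0 by linarith
  show "GG b > 0" by (rule GG_pos[OF b0 bs])
  fix C' :: real assume C0: "0 \<le> C'" and CG: "C' < GG b"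
  have b2: "2 * b < b + c - a" using cab by simp
  show "\<exists>\<eta> n. (\<Sum>j\<le>n. \<Sum>k\<le>n. Aq (j + k) * \<eta> j * \<eta> k) > C' * (\<Sum>k\<le>n. (\<eta> k)\<^sup>2 / dd k)"
  proof (rule lowgen[OF b0 b2 _ C0, of 1 0])
    show "(pp b j)\<^sup>2 / dd j \<le> 1 * (pp b j * rho b j)" for j
    proof -
      have e: "real j + b + c - b = real j + c" by simp
      have "(pp b j)\<^sup>2 / dd j = pp b j * (pp b j / dd j)" by (simp add: power2_eq_square)
      also have "pp b j / dd j = rho b j"
      proof -
        have "real j + b > 0" using b0 by simp
        hence "Gamma (real j + b) > 0" by (rule Gamma_real_pos)
        hence "Gamma (real j + b) \<noteq> 0" by simp
        thus ?thesis unfolding pp_dd rho_def e by simp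
      qed
      finally show ?thesis by simp
    qed
    have S0: "S1 b > 0" unfolding S1_def using cab a0 b0 c0
      by (intro divide_pos_pos mult_pos_pos Gamma_real_pos) auto
    show "GG b * S1 b > C' * ((\<Sum>j<0. (pp b j)\<^sup>2 / dd j) + 1 * S1 b)"
      using CG S0 by simp
  qed simp
qed

lemma low3:
  assumes cab: "a + c - b < 0"
  shows "C < GG c \<Longrightarrow> \<exists>\<eta> n. (\<Sum>j\<le>n. \<Sum>k\<le>n. Aq (j + k) * \<eta> j * \<eta> k) > C * (\<Sum>k\<le>n. (\<eta> k)\<^sup>2 / dd k)"
proof (rule lowwrap)
  have bs: "c < b + c - a" using cab a0 c0 by linarith
  show "GG c > 0" by (rule GG_pos[OF c0 bs])
  fix C' :: real assume C0: "0 \<le> C'" and CG: "C' < GG c"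
  have b2: "2 * c < b + c - a" using cab by simp
  show "\<exists>\<eta> n. (\<Sum>j\<le>n. \<Sum>k\<le>n. Aq (j + k) * \<eta> j * \<eta> k) > C' * (\<Sum>k\<le>n. (\<eta> k)\<^sup>2 / dd k)"
  proof (rule lowgen[OF c0 b2 _ C0, of 1 0])
    show "(pp c j)\<^sup>2 / dd j \<le> 1 * (pp c j * rho c j)" for j
    proof -
      have e: "real j + b + c - c = real j + b" by simp
      have "(pp c j)\<^sup>2 / dd j = pp c j * (pp c j / dd j)" by (simp add: power2_eq_square)
      also have "pp c j / dd j = rho c j"
      proof -
        have "real j + c > 0" using c0 by simp
        hence "Gamma (real j + c) > 0" by (rule Gamma_real_pos)
        hence "Gamma (real j + c) \<noteq> 0" by simp
        thus ?thesis unfolding pp_dd rho_def e by simp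
      qed
      finally show ?thesis by simp
    qed
    have S0: "S1 c > 0" unfolding S1_def using cab a0 b0 c0
      by (intro divide_pos_pos mult_pos_pos Gamma_real_pos) auto
    show "GG c * S1 c > C' * ((\<Sum>j<0. (pp c j)\<^sup>2 / dd j) + 1 * S1 c)"
      using CG S0 by simp
  qed simp
qed

end

lemma Gnz0: "x > 0 \<Longrightarrow> Gamma (x::real) \<noteq> 0"
  using Gamma_real_pos[of x] by linarith

lemma ratio_lim: "((\<lambda>j::nat. (real j + x) / (real j + y)) \<longlongrightarrow> 1) sequentially"
  by real_asymp

context params begin

lemma rb_case1:
  assumes hb: "\<beta> \<le> b" "\<beta> \<le> c" and b0': "\<beta>0 > 0" and bb: "\<beta>0 \<le> \<beta>" and j1: "j \<ge> 1"
  shows "Gamma (real j + \<beta>) * Gamma (real j + b + c - \<beta>) \<le>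
           Gamma (real j + b) * Gamma (real j + c) * ((real j + b + c) / (real j + \<beta>0 - 1)) powr (min b c)"
proof -
  define u where "u = real j + \<beta>"
  define v where "v = real j + b + c - \<beta>"
  define y1 where "y1 = real j + min b c"
  define y2 where "y2 = real j + max b c"
  have u1: "u > 1" unfolding u_def using j1 b0' bb by simp
  have uy1: "u \<le> y1" unfolding u_def y1_def using hb by simp
  have y12: "y1 \<le> y2" unfolding y1_def y2_def by simp
  have sm: "y1 + y2 = u + v" unfolding y1_def y2_def u_def v_def by (simp add: min_def max_def)
  have gy: "Gamma y1 * Gamma y2 = Gamma (real j + b) * Gamma (real j + c)"
    unfolding y1_def y2_def by (cases "b \<le> c") (simp_all add: min_def max_def mult.commute)
  from Gamma_ratio_bound[OF u1 uy1 y12 sm]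
  have r: "Gamma u * Gamma v \<le> Gamma y1 * Gamma y2 * (v / (u - 1)) powr (y1 - u)" .
  have Gp: "Gamma y1 * Gamma y2 > 0" using u1 uy1 y12 by simp
  have base1: "v / (u - 1) \<ge> 1" using u1 sm uy1 y12 by simp
  have base2: "v / (u - 1) \<le> (real j + b + c) / (real j + \<beta>0 - 1)"
  proof (rule frac_le)
    show "0 \<le> real j + b + c" using b0 c0 by simp
    show "v \<le> real j + b + c" unfolding v_def using b0' bb by simp
    show "0 < real j + \<beta>0 - 1" using j1 b0' by simp
    show "real j + \<beta>0 - 1 \<le> u - 1" unfolding u_def using bb by simp
  qed
  have ex: "0 \<le> y1 - u" "y1 - u \<le> min b c" using uy1 unfolding y1_def u_def using b0' bb by auto
  have "(v / (u - 1)) powr (y1 - u) \<le> (v / (u - 1)) powr (min b c)"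
    by (rule powr_mono[OF ex(2) base1])
  also have "\<dots> \<le> ((real j + b + c) / (real j + \<beta>0 - 1)) powr (min b c)"
    using base1 base2 b0 c0 by (intro powr_mono2) auto
  finally have "(v / (u - 1)) powr (y1 - u) \<le> ((real j + b + c) / (real j + \<beta>0 - 1)) powr (min b c)" .
  hence "Gamma y1 * Gamma y2 * (v / (u - 1)) powr (y1 - u) \<le>
         Gamma y1 * Gamma y2 * ((real j + b + c) / (real j + \<beta>0 - 1)) powr (min b c)"
    using Gp by (intro mult_left_mono) auto
  with r show ?thesis unfolding gy unfolding u_def v_def by simp
qed

lemma low1:
  assumes c1: "a + b - c \<ge> 0" and c2: "a + c - b \<ge> 0"
  shows "C < GG ((b + c - a) / 2) \<Longrightarrow>
    \<exists>\<eta> n. (\<Sum>j\<le>n. \<Sum>k\<le>n. Aq (j + k) * \<eta> j * \<eta> k) > C * (\<Sum>k\<le>n. (\<eta> k)\<^sup>2 / dd k)"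
proof (rule lowwrap)
  define h where "h = (b + c - a) / 2"
  have h0: "h > 0" unfolding h_def using s0 by simp
  have hs: "h < b + c - a" unfolding h_def using s0 by simp
  have hb: "h \<le> b" "h \<le> c" unfolding h_def using c1 c2 by simp_all
  show "GG ((b + c - a) / 2) > 0" using GG_pos[OF h0 hs] unfolding h_def .
  fix C' :: real assume C0: "0 \<le> C'" and CG: "C' < GG ((b + c - a) / 2)"
  define L where "L = GG h"
  have L0: "L > 0" unfolding L_def by (rule GG_pos[OF h0 hs])
  have CL: "C' < L" using CG unfolding L_def h_def .
  define K where "K = 2 * L / (C' + L)"
  have K1: "K > 1" unfolding K_def using C0 CL L0 by (simp add: field_simps)
  have CK: "C' * K < L" unfolding K_def using C0 CL L0 by (simp add: field_simps)
  define \<beta>0 where "\<beta>0 = h / 2"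
  have b00: "\<beta>0 > 0" unfolding \<beta>0_def using h0 by simp
  define g where "g j = ((real j + b + c) / (real j + \<beta>0 - 1)) powr (min b c)" for j :: nat
  have glim: "g \<longlonglongrightarrow> 1"
  proof -
    have "((\<lambda>j::nat. (real j + (b + c)) / (real j + (\<beta>0 - 1))) \<longlonglongrightarrow> 1)" by (rule ratio_lim)
    hence "((\<lambda>j::nat. ((real j + (b + c)) / (real j + (\<beta>0 - 1))) powr (min b c)) \<longlonglongrightarrow> 1 powr (min b c))"
      by (intro tendsto_intros) auto
    thus ?thesis unfolding g_def by (simp add: add.assoc add_diff_eq)
  qed
  from order_tendstoD(2)[OF glim K1] obtain m0 where m0: "\<And>j. j \<ge> m0 \<Longrightarrow> g j < K"
    unfolding eventually_sequentially by blast
  define m where "m = max m0 1"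
  have rb: "(pp \<beta> j)\<^sup>2 / dd j \<le> K * (pp \<beta> j * rho \<beta> j)"
    if bb: "\<beta>0 \<le> \<beta>" "\<beta> \<le> h" and jm: "j \<ge> m" for \<beta> j
  proof -
    have bp: "\<beta> > 0" using bb b00 by simp
    have j1: "j \<ge> 1" using jm unfolding m_def by simp
    have bc: "\<beta> \<le> b" "\<beta> \<le> c" using bb hb by auto
    have gg: "Gamma (real j + \<beta>) * Gamma (real j + b + c - \<beta>) \<le> Gamma (real j + b) * Gamma (real j + c) * K"
    proof -
      have "Gamma (real j + \<beta>) * Gamma (real j + b + c - \<beta>) \<le> Gamma (real j + b) * Gamma (real j + c) * g j"
        using rb_case1[OF bc b00 bb(1) j1] unfolding g_def .
      also have "\<dots> \<le> Gamma (real j + b) * Gamma (real j + c) * K"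
        using m0[of j] jm unfolding m_def using b0 c0 by (intro mult_left_mono) auto
      finally show ?thesis .
    qed
    have p1: "real j + b > 0" "real j + c > 0" "real j + a > 0" "real j + b + c - \<beta> > 0"
      using a0 b0 c0 bc by auto
    have G1: "Gamma (real j + b) > 0" "Gamma (real j + c) > 0" "Gamma (real j + a) > 0" "Gamma (real j + b + c - \<beta>) > 0"
      using p1 by (auto intro: Gamma_real_pos)
    have "pp \<beta> j / dd j \<le> K * rho \<beta> j"
    proof -
      have "pp \<beta> j / dd j = Gamma (real j + \<beta>) * Gamma (real j + a) / (Gamma (real j + b) * Gamma (real j + c))"
        by (rule pp_dd)
      also have "\<dots> \<le> K * rho \<beta> j" unfolding rho_def
        using gg G1 by (simp add: field_simps)
      finally show ?thesis .
    qed
    hence "pp \<beta> j * (pp \<beta> j / dd j) \<le> pp \<beta> j * (K * rho \<beta> j)"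
      using pp_pos[OF bp, of j] by (intro mult_left_mono) auto
    thus ?thesis by (simp add: power2_eq_square mult_ac)
  qed
  define H where "H \<beta> = (\<Sum>j<m. (pp \<beta> j)\<^sup>2 / dd j)" for \<beta>
  define F where "F e = - C' * H (h - e) + (GG (h - e) - C' * K) * S1 (h - e)" for e
  have Htend: "((\<lambda>e. H (h - e)) \<longlongrightarrow> H h) (at_right 0)"
  proof -
    have "((\<lambda>e. \<Sum>j<m. (Gamma (real j + (h - e)) / fact j)\<^sup>2 / dd j) \<longlongrightarrow>
           (\<Sum>j<m. (Gamma (real j + (h - 0)) / fact j)\<^sup>2 / dd j)) (at_right 0)"
      using h0 dd_pos by (intro tendsto_intros) (auto elim!: nonpos_Ints_cases simp: less_imp_neq[symmetric])
    thus ?thesis unfolding H_def pp_def by simp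
  qed
  have Gnz: "Gamma (b + c - a) \<noteq> 0" using Gamma_real_pos[OF s0] by linarith
  have GGtend: "((\<lambda>e. GG (h - e)) \<longlongrightarrow> L) (at_right 0)"
  proof -
    have "((\<lambda>e. Gamma (h - e) * Gamma (b + c - a - (h - e)) / Gamma (b + c - a)) \<longlongrightarrow>
           Gamma (h - 0) * Gamma (b + c - a - (h - 0)) / Gamma (b + c - a)) (at_right 0)"
      using h0 hs Gnz by (intro tendsto_intros) (auto elim!: nonpos_Ints_cases)
    thus ?thesis unfolding GG_def L_def by simp
  qed
  have S1inf: "filterlim (\<lambda>e. S1 (h - e)) at_top (at_right 0)"
  proof -
    define P where "P e = Gamma a * Gamma (h - e) / (Gamma (h + e) * Gamma (a + 2 * e))" for e :: real
    define Z where "Z e = Gamma (2 * e + 1) * inverse (2 * e)" for e :: real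
    have Ptend: "(P \<longlongrightarrow> Gamma a * Gamma (h - 0) / (Gamma (h + 0) * Gamma (a + 2 * 0))) (at_right 0)"
      unfolding P_def using h0 a0 Gnz0[OF h0] Gnz0[OF a0] by (intro tendsto_intros) (auto elim!: nonpos_Ints_cases)
    have Pv: "Gamma a * Gamma (h - 0) / (Gamma (h + 0) * Gamma (a + 2 * 0)) = 1"
      using Gnz0[OF h0] Gnz0[OF a0] by simp
    have inv2: "filterlim (\<lambda>e::real. inverse 2 * inverse e) at_top (at_right 0)"
      by (rule filterlim_tendsto_pos_mult_at_top[OF tendsto_const _ filterlim_inverse_at_top_right]) simp
    have Zinf: "filterlim Z at_top (at_right 0)"
    proof -
      have g1: "((\<lambda>e. Gamma (2 * e + 1)) \<longlongrightarrow> Gamma (2 * 0 + 1)) (at_right (0::real))"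
        by (intro tendsto_intros) (auto elim!: nonpos_Ints_cases)
      have "filterlim (\<lambda>e::real. Gamma (2 * e + 1) * (inverse 2 * inverse e)) at_top (at_right 0)"
        by (rule filterlim_tendsto_pos_mult_at_top[OF g1 _ inv2]) simp
      thus ?thesis unfolding Z_def by (simp add: mult_ac)
    qed
    have PZ: "filterlim (\<lambda>e. P e * Z e) at_top (at_right 0)"
      by (rule filterlim_tendsto_pos_mult_at_top[OF Ptend _ Zinf]) (use Pv Gnz0[OF h0] Gnz0[OF a0] in simp)
    have ev: "eventually (\<lambda>e. P e * Z e = S1 (h - e)) (at_right 0)"
    proof -
      have "eventually (\<lambda>e. e \<in> {0<..<h}) (at_right 0)" by (rule eventually_at_right_real[OF h0])
      thus ?thesis
      proof (rule eventually_mono)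
        fix e assume e: "e \<in> {0<..<h}"
        have e1: "b + c - a - 2 * (h - e) = 2 * e" "b + c - a - (h - e) = h + e" "b + c - 2 * (h - e) = a + 2 * e"
          unfolding h_def by (simp_all add: field_simps)
        have ne: "2 * e \<notin> \<int>\<^sub>\<le>\<^sub>0" using e by (auto elim!: nonpos_Ints_cases)
        have G2: "Gamma (2 * e + 1) = 2 * e * Gamma (2 * e)" using Gamma_plus1[OF ne] .
        have pos: "Gamma (h + e) > 0" "Gamma (a + 2 * e) > 0" "2 * e > 0" using e h0 a0 by auto
        show "P e * Z e = S1 (h - e)"
          unfolding P_def Z_def S1_def e1 G2 using pos by (simp add: field_simps)
      qed
    qed
    show ?thesis using filterlim_cong[OF refl refl ev] PZ by simp
  qed
  have Finf: "filterlim F at_top (at_right 0)"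
    unfolding F_def
  proof (rule filterlim_tendsto_add_at_top)
    show "((\<lambda>e. - C' * H (h - e)) \<longlongrightarrow> - C' * H h) (at_right 0)" by (intro tendsto_intros Htend)
    have "((\<lambda>e. GG (h - e) - C' * K) \<longlongrightarrow> L - C' * K) (at_right 0)" by (intro tendsto_intros GGtend)
    thus "filterlim (\<lambda>e. (GG (h - e) - C' * K) * S1 (h - e)) at_top (at_right 0)"
      by (rule filterlim_tendsto_pos_mult_at_top[OF _ _ S1inf]) (use CK in simp)
  qed
  have "eventually (\<lambda>e. 0 < F e) (at_right 0)" using Finf by (simp add: filterlim_at_top_dense)
  moreover have "eventually (\<lambda>e. e \<in> {0<..<h / 2}) (at_right 0)" by (rule eventually_at_right_real) (use h0 in simp)
  ultimately have "eventually (\<lambda>e. 0 < F e \<and> e \<in> {0<..<h / 2}) (at_right 0)" by (rule eventually_conj)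
  then obtain e where e: "0 < F e" "e \<in> {0<..<h / 2}" using eventually_happens'[OF trivial_limit_at_right_real] by blast
  define \<beta> where "\<beta> = h - e"
  have bp: "\<beta> > 0" "\<beta>0 \<le> \<beta>" "\<beta> \<le> h" using e h0 unfolding \<beta>_def \<beta>0_def by auto
  have b2: "2 * \<beta> < b + c - a" using e unfolding \<beta>_def h_def by (auto simp: field_simps)
  show "\<exists>\<eta> n. (\<Sum>j\<le>n. \<Sum>k\<le>n. Aq (j + k) * \<eta> j * \<eta> k) > C' * (\<Sum>k\<le>n. (\<eta> k)\<^sup>2 / dd k)"
  proof (rule lowgen[OF bp(1) b2 _ C0, of K m])
    show "0 \<le> K" using K1 by simp
    show "(pp \<beta> j)\<^sup>2 / dd j \<le> K * (pp \<beta> j * rho \<beta> j)" if "m \<le> j" for j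
      using rb[OF bp(2) bp(3) that] .
    show "GG \<beta> * S1 \<beta> > C' * ((\<Sum>j<m. (pp \<beta> j)\<^sup>2 / dd j) + K * S1 \<beta>)"
      using e(1) unfolding F_def H_def \<beta>_def[symmetric] by (simp add: algebra_simps)
  qed
qed

end

theorem mainTheorem5:
  fixes a b c :: real
  assumes "a > 0" and "b > 0" and "c > 0" and "b + c - a > 0"
  shows "bounded_mat_op (Bmat a b c) \<and> positive_mat_op (Bmat a b c)
    \<and> (a + b - c \<ge> 0 \<and> a + c - b \<ge> 0 \<longrightarrow>
         mat_op_norm (Bmat a b c) = (Gamma ((b + c - a) / 2))\<^sup>2 / Gamma (b + c - a))
    \<and> (a + b - c < 0 \<and> a + c - b \<ge> 0 \<longrightarrow>
         mat_op_norm (Bmat a b c) = Gamma b * Gamma (c - a) / Gamma (b + c - a))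
    \<and> (a + b - c \<ge> 0 \<and> a + c - b < 0 \<longrightarrow>
         mat_op_norm (Bmat a b c) = Gamma c * Gamma (b - a) / Gamma (b + c - a))
    \<and> (\<forall>(\<xi>::nat \<Rightarrow> real) (n::nat).
         0 \<le> (\<Sum>j\<le>n. \<Sum>k\<le>n. Gamma (real (j + k) + a) / Gamma (real (j + k) + b + c) * \<xi> j * \<xi> k)
       \<and> (\<Sum>j\<le>n. \<Sum>k\<le>n. Gamma (real (j + k) + a) / Gamma (real (j + k) + b + c) * \<xi> j * \<xi> k)
           \<le> mat_op_norm (Bmat a b c) *
             (\<Sum>k\<le>n. Gamma (real k + a) * fact k / (Gamma (real k + b) * Gamma (real k + c)) * (\<xi> k)\<^sup>2))
    \<and> (\<forall>C < mat_op_norm (Bmat a b c). \<exists>(\<xi>::nat \<Rightarrow> real) (n::nat).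
         (\<Sum>j\<le>n. \<Sum>k\<le>n. Gamma (real (j + k) + a) / Gamma (real (j + k) + b + c) * \<xi> j * \<xi> k)
           > C * (\<Sum>k\<le>n. Gamma (real k + a) * fact k / (Gamma (real k + b) * Gamma (real k + c)) * (\<xi> k)\<^sup>2))"
proof -
  interpret params a b c using assms by unfold_locales
  define P6 where "P6 = (\<forall>(\<xi>::nat \<Rightarrow> real) (n::nat).
         0 \<le> (\<Sum>j\<le>n. \<Sum>k\<le>n. Gamma (real (j + k) + a) / Gamma (real (j + k) + b + c) * \<xi> j * \<xi> k)
       \<and> (\<Sum>j\<le>n. \<Sum>k\<le>n. Gamma (real (j + k) + a) / Gamma (real (j + k) + b + c) * \<xi> j * \<xi> k)
           \<le> mat_op_norm (Bmat a b c) *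
             (\<Sum>k\<le>n. Gamma (real k + a) * fact k / (Gamma (real k + b) * Gamma (real k + c)) * (\<xi> k)\<^sup>2))"
  define P7 where "P7 = (\<forall>C < mat_op_norm (Bmat a b c). \<exists>(\<xi>::nat \<Rightarrow> real) (n::nat).
         (\<Sum>j\<le>n. \<Sum>k\<le>n. Gamma (real (j + k) + a) / Gamma (real (j + k) + b + c) * \<xi> j * \<xi> k)
           > C * (\<Sum>k\<le>n. Gamma (real k + a) * fact k / (Gamma (real k + b) * Gamma (real k + c)) * (\<xi> k)\<^sup>2))"
  consider (c1) "a + b - c \<ge> 0 \<and> a + c - b \<ge> 0" | (c2) "a + b - c < 0" | (c3) "a + c - b < 0" by linarith
  thus ?thesis
  proof cases
    case c1
    define h where "h = (b + c - a) / 2"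
    have h0: "h > 0" unfolding h_def using s0 by simp
    have hs: "h < b + c - a" unfolding h_def using s0 by simp
    have hb: "h \<le> b" "h \<le> c" unfolding h_def using c1 by simp_all
    have cmp: "Gamma (real j + b) * Gamma (real j + c) \<le> Gamma (real j + h) * Gamma (real j + b + c - h)" for j
      by (rule Gamma_prod_le) (use h0 hb in auto)
    have R: "bounded_mat_op (Bmat a b c) \<and> positive_mat_op (Bmat a b c) \<and> mat_op_norm (Bmat a b c) = GG h \<and> P6 \<and> P7"
      unfolding P6_def P7_def
      by (rule core[OF h0 hs cmp]) (use low1[OF conjunct1[OF c1] conjunct2[OF c1]] in \<open>simp add: h_def\<close>)
    have "GG h = (Gamma ((b + c - a) / 2))\<^sup>2 / Gamma (b + c - a)"
    proof -
      have e: "b + c - a - h = h" unfolding h_def by (simp add: field_simps)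
      show ?thesis unfolding GG_def e unfolding h_def by (simp add: power2_eq_square)
    qed
    thus ?thesis using R c1 unfolding P6_def P7_def by auto
  next
    case c2
    have bs: "b < b + c - a" using c2 a0 b0 by linarith
    have cmp: "Gamma (real j + b) * Gamma (real j + c) \<le> Gamma (real j + b) * Gamma (real j + b + c - b)" for j
      by simp
    have R: "bounded_mat_op (Bmat a b c) \<and> positive_mat_op (Bmat a b c) \<and> mat_op_norm (Bmat a b c) = GG b \<and> P6 \<and> P7"
      unfolding P6_def P7_def by (rule core[OF b0 bs cmp]) (rule low2[OF c2])
    have "GG b = Gamma b * Gamma (c - a) / Gamma (b + c - a)"
      unfolding GG_def by simp
    moreover have "a + c - b \<ge> 0" using c2 a0 by linarith
    ultimately show ?thesis using R c2 unfolding P6_def P7_def by auto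
  next
    case c3
    have cs: "c < b + c - a" using c3 a0 c0 by linarith
    have cmp: "Gamma (real j + b) * Gamma (real j + c) \<le> Gamma (real j + c) * Gamma (real j + b + c - c)" for j
      by simp
    have R: "bounded_mat_op (Bmat a b c) \<and> positive_mat_op (Bmat a b c) \<and> mat_op_norm (Bmat a b c) = GG c \<and> P6 \<and> P7"
      unfolding P6_def P7_def by (rule core[OF c0 cs cmp]) (rule low3[OF c3])
    have "GG c = Gamma c * Gamma (b - a) / Gamma (b + c - a)"
      unfolding GG_def by simp
    moreover have "a + b - c \<ge> 0" using c3 a0 by linarith
    ultimately show ?thesis using R c3 unfolding P6_def P7_def by auto
  qed
qed

end
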